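(* Let $N\ge 0$, $L\ge 2$ and $1\le l_A\le L-1$ be integers, put $l_B=L-l_A$, and let $\mathcal H_N$ be the $N$-particle bosonic Fock space of $L$ modes described in the context. Let $\rho$ be a density operator on $\mathcal H_N$ with eigenvalues $p_1\ge p_2\ge\dots\ge p_{d_{AB}}$ listed with multiplicity, where $d_{AB}=\dim\mathcal H_N=\binom{N+L-1}{L-1}$. Order the $N+1$ sectors $\mathcal H_{A,n_A}\otimes\mathcal H_{B,N-n_A}$, $n_A=0,\dots,N$, as $k=0,1,\dots,N$ so that $d_{A,0}\ge d_{A,1}\ge\dots\ge d_{A,N}$, where $d_{A,k}$ and $d_{B,k}$ are the dimensions of the $A$-factor and the $B$-factor of the $k$-th sector, and $d_k=d_{A,k}d_{B,k}$. Partition the decreasingly ordered eigenvalues into consecutive groups: group $0$ consists of the first $d_0$ eigenvalues, group $1$ of the next $d_1$, and so on. Write $p_{k,1}\ge p_{k,2}\ge\dots\ge p_{k,d_k}$ for the eigenvalues in group $k$. Thus every eigenvalue in group $k$ is at least every eigenvalue in group $k+1$. For $b=1,\dots,d_{B,k}$ set $$q_{k,b}=\sum_{a=1}^{d_{A,k}} p_{k,(b-1)d_{A,k}+a}.$$ Then $$\min_{U}\, S\big(\operatorname{Tr}_A(U\rho U^\dagger)\big)=-\sum_{k=0}^{N}\sum_{b=1}^{d_{B,k}} q_{k,b}\log q_{k,b},$$ where the minimum is over all unitary operators $U$ on $\mathcal H_N$, i.e. all unitaries on the Fock space that commute with the total number operator, restricted to $\mathcal H_N$.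
   Context: There are $L$ bosonic modes (sites) with annihilation operators $\hat b_i$ and number operators $\hat n_i=\hat b_i^\dagger\hat b_i$, $i=1,\dots,L$. Subsystem $A$ consists of modes $1,\dots,l_A$ and subsystem $B$ of modes $l_A+1,\dots,L$. $\mathcal H_N$ is the span of the occupation-number basis states $|n_1,\dots,n_L\rangle$ with $\sum_i n_i=N$. It decomposes as $\mathcal H_N=\bigoplus_{n_A=0}^{N}\mathcal H_{A,n_A}\otimes\mathcal H_{B,N-n_A}$. Here $\mathcal H_{A,n}$ is spanned by the states $|n_1,\dots,n_{l_A}\rangle_A$ with $\sum_{i\le l_A}n_i=n$, and has dimension $\binom{n+l_A-1}{l_A-1}$. Likewise $\mathcal H_{B,m}$ is spanned by the states $|n_{l_A+1},\dots,n_L\rangle_B$ with total number $m$, and has dimension $\binom{m+l_B-1}{l_B-1}$. The reduced state $\operatorname{Tr}_A$ is the partial trace over the modes of $A$, taken in the usual Fock space of $A$ and $B$. Equivalently, $\operatorname{Tr}_A\sigma=\bigoplus_{m}\operatorname{Tr}_{\mathcal H_{A,N-m}}\big(\text{diagonal block of }\sigma\text{ on }\mathcal H_{A,N-m}\otimes\mathcal H_{B,m}\big)$. $S(\sigma)=-\operatorname{Tr}\sigma\log\sigma$ is the von Neumann entropy, with a fixed logarithm base and the convention $0\log 0=0$. *)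

theory Defs
  imports "Jordan_Normal_Form.Matrix" "Jordan_Normal_Form.Char_Poly"
    "HOL-Computational_Algebra.Polynomial"
begin

text \<open>Occupation-number basis: all lists of length l of naturals with sum n,
  in a fixed enumeration. The basis of H_N for L modes is comps N L.\<close>
fun comps :: "nat \<Rightarrow> nat \<Rightarrow> nat list list" where
  "comps n 0 = (if n = 0 then [[]] else [])"
| "comps n (Suc l) = concat (map (\<lambda>k. map (\<lambda>xs. k # xs) (comps (n - k) l)) [0..<Suc n])"

definition adj :: "complex mat \<Rightarrow> complex mat" where
  "adj A = mat (dim_col A) (dim_row A) (\<lambda>(i, j). cnj (A $$ (j, i)))"

definition unitary_op :: "nat \<Rightarrow> complex mat \<Rightarrow> bool" where
  "unitary_op d U \<longleftrightarrow> U \<in> carrier_mat d d \<and> U * adj U = 1\<^sub>m d"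

definition mat_trace :: "complex mat \<Rightarrow> complex" where
  "mat_trace A = (\<Sum>i<dim_row A. A $$ (i, i))"

definition density_op :: "nat \<Rightarrow> complex mat \<Rightarrow> bool" where
  "density_op d R \<longleftrightarrow> R \<in> carrier_mat d d \<and> adj R = R
     \<and> (\<forall>v \<in> carrier_vec d. 0 \<le> Re (conjugate v \<bullet> (R *\<^sub>v v)))
     \<and> mat_trace R = 1"

text \<open>Basis of the Fock space of B (l_B modes) with at most N particles.\<close>
definition Bstates :: "nat \<Rightarrow> nat \<Rightarrow> nat list list" where
  "Bstates N lB = concat (map (\<lambda>m. comps m lB) [0..<Suc N])"

text \<open>Partial trace over the first lA modes of an operator on H_N (L modes),
  Tr_A sigma (y,y') = sum_x sigma(x y, x y').\<close>
definition ptrace_A :: "nat \<Rightarrow> nat \<Rightarrow> nat \<Rightarrow> complex mat \<Rightarrow> complex mat" where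
  "ptrace_A N L lA \<sigma> =
    (let st = comps N L; d = length st; Bs = Bstates N (L - lA); dB = length Bs in
     mat dB dB (\<lambda>(i, j). \<Sum>a<d. \<Sum>b<d.
        if drop lA (st ! a) = Bs ! i \<and> drop lA (st ! b) = Bs ! j
           \<and> take lA (st ! a) = take lA (st ! b)
        then \<sigma> $$ (a, b) else 0))"

text \<open>Note log beta 0 = 0 in Isabelle, giving the convention 0 log 0 = 0.\<close>
definition vN_entropy :: "real \<Rightarrow> complex mat \<Rightarrow> real" where
  "vN_entropy \<beta> A = - sum_mset (image_mset (\<lambda>z. Re z * log \<beta> (Re z)) (proots (char_poly A)))"

end

theory Submission
  imports Defs "Jordan_Normal_Form.Schur_Decomposition" "HOL-Combinatorics.Permutations"
begin

definition dmat :: "nat \<Rightarrow> (nat \<Rightarrow> complex) \<Rightarrow> complex mat" where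
  "dmat n f = mat n n (\<lambda>(i,j). if i = j then f i else 0)"

lemma dmat_carrier[simp]: "dmat n f \<in> carrier_mat n n" "dim_row (dmat n f) = n" "dim_col (dmat n f) = n"
  by (auto simp: dmat_def)

lemma dmat_index[simp]: "i < n \<Longrightarrow> j < n \<Longrightarrow> dmat n f $$ (i,j) = (if i = j then f i else 0)"
  by (simp add: dmat_def)

lemma adj_dims[simp]: "dim_row (adj A) = dim_col A" "dim_col (adj A) = dim_row A"
  by (auto simp: adj_def)

lemma adj_carrier[simp]: "A \<in> carrier_mat n m \<Longrightarrow> adj A \<in> carrier_mat m n"
  by (auto simp: adj_def)

lemma adj_index[simp]: "i < dim_col A \<Longrightarrow> j < dim_row A \<Longrightarrow> adj A $$ (i,j) = cnj (A $$ (j,i))"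
  by (simp add: adj_def)

lemma adj_adj[simp]: "adj (adj A) = A"
  by (rule eq_matI) auto

lemma mult_entry: "A \<in> carrier_mat n m \<Longrightarrow> B \<in> carrier_mat m k \<Longrightarrow> i < n \<Longrightarrow> j < k \<Longrightarrow>
  (A * B) $$ (i,j) = (\<Sum>l<m. A $$ (i,l) * B $$ (l,j))"
  by (auto simp: scalar_prod_def row_def col_def intro!: sum.cong)

lemma adj_mult: assumes "A \<in> carrier_mat n m" "B \<in> carrier_mat m k"
  shows "adj (A * B) = adj B * adj A"
proof (rule eq_matI)
  fix i j assume "i < dim_row (adj B * adj A)" "j < dim_col (adj B * adj A)"
  then have ij: "i < k" "j < n" using assms by auto
  have "adj (A * B) $$ (i,j) = cnj ((A*B) $$ (j,i))" using assms ij by simp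
  also have "\<dots> = cnj (\<Sum>l<m. A $$ (j,l) * B $$ (l,i))"
    by (subst mult_entry[OF assms ij(2) ij(1)]) simp
  also have "\<dots> = (\<Sum>l<m. cnj (A $$ (j,l)) * cnj (B $$ (l,i)))"
    by (simp add: cnj_sum)
  also have "\<dots> = (adj B * adj A) $$ (i,j)"
    using assms ij by (subst mult_entry[of _ k m _ n]) (auto intro!: sum.cong)
  finally show "adj (A * B) $$ (i,j) = (adj B * adj A) $$ (i,j)" .
qed (use assms in auto)

lemma unitary_carrier: "unitary_op n U \<Longrightarrow> U \<in> carrier_mat n n"
  by (simp add: unitary_op_def)

lemma unitary_right: "unitary_op n U \<Longrightarrow> U * adj U = 1\<^sub>m n"
  by (simp add: unitary_op_def)

lemma unitary_left: "unitary_op n U \<Longrightarrow> adj U * U = 1\<^sub>m n"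
  by (rule mat_mult_left_right_inverse[of U n]) (auto simp: unitary_op_def)

lemma unitary_adj: "unitary_op n U \<Longrightarrow> unitary_op n (adj U)"
  using unitary_left[of n U] by (auto simp: unitary_op_def)

lemma unitary_mult: assumes "unitary_op n U" "unitary_op n V" shows "unitary_op n (U * V)"
proof -
  have U: "U \<in> carrier_mat n n" and V: "V \<in> carrier_mat n n" using assms by (auto simp: unitary_op_def)
  have "U * V * adj (U * V) = U * V * (adj V * adj U)"
    using U V by (simp add: adj_mult[OF U V])
  also have "\<dots> = U * ((V * adj V) * adj U)"
  proof -
    have X: "adj V * adj U \<in> carrier_mat n n" using U V by auto
    show ?thesis using U V by (simp add: assoc_mult_mat[OF U V X] assoc_mult_mat[OF V adj_carrier[OF V] adj_carrier[OF U]])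
  qed
  also have "\<dots> = U * adj U" using assms U V by (simp add: unitary_right)
  also have "\<dots> = 1\<^sub>m n" using assms by (simp add: unitary_right)
  finally show ?thesis using U V by (auto simp: unitary_op_def)
qed

lemma unitary_one: "unitary_op n (1\<^sub>m n)"
proof -
  have "adj (1\<^sub>m n) = 1\<^sub>m n" by (rule eq_matI) auto
  then show ?thesis by (simp add: unitary_op_def)
qed

lemma sq_mult: "A \<in> carrier_mat n n \<Longrightarrow> B \<in> carrier_mat n n \<Longrightarrow> A * B \<in> carrier_mat n n"
  by auto
lemma sq_adj: "A \<in> carrier_mat n n \<Longrightarrow> adj A \<in> carrier_mat n n"
  by auto
lemma sq_assoc: "A \<in> carrier_mat n n \<Longrightarrow> B \<in> carrier_mat n n \<Longrightarrow> C \<in> carrier_mat n n \<Longrightarrow> A * B * C = A * (B * C)"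
  by simp

lemma WDW_entry: assumes W: "W \<in> carrier_mat n n" and ij: "i < n" "j < n"
  shows "(W * dmat n f * adj W) $$ (i,j) = (\<Sum>k<n. W $$ (i,k) * f k * cnj (W $$ (j,k)))"
proof -
  have WD: "W * dmat n f \<in> carrier_mat n n" using W by auto
  have e: "(W * dmat n f) $$ (i,k) = W $$ (i,k) * f k" if "k < n" for k
  proof -
    have "(W * dmat n f) $$ (i,k) = (\<Sum>l<n. W $$ (i,l) * dmat n f $$ (l,k))"
      using W ij that by (subst mult_entry[OF W dmat_carrier(1)]) auto
    also have "\<dots> = (\<Sum>l<n. if l = k then W $$ (i,l) * f k else 0)"
      using that by (intro sum.cong) auto
    also have "\<dots> = W $$ (i,k) * f k" using that by simp
    finally show ?thesis .
  qed
  have "(W * dmat n f * adj W) $$ (i,j) = (\<Sum>k<n. (W * dmat n f) $$ (i,k) * adj W $$ (k,j))"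
    using WD W ij by (subst mult_entry[OF WD adj_carrier[OF W]]) auto
  also have "\<dots> = (\<Sum>k<n. W $$ (i,k) * f k * cnj (W $$ (j,k)))"
    using W ij apply (intro sum.cong refl) apply (subst e) by auto
  finally show ?thesis .
qed

lemma cscalar_self: assumes "w \<in> carrier_vec n"
  shows "w \<bullet>c w = complex_of_real (\<Sum>k<n. (cmod (w $ k))\<^sup>2)"
proof -
  have "w \<bullet>c w = (\<Sum>k<n. w $ k * cnj (w $ k))" using assms by (auto simp: scalar_prod_def atLeast0LessThan)
  also have "\<dots> = (\<Sum>k<n. complex_of_real ((cmod (w $ k))\<^sup>2))"
    by (intro sum.cong refl) (metis complex_norm_square)
  also have "\<dots> = complex_of_real (\<Sum>k<n. (cmod (w $ k))\<^sup>2)" by (simp only: of_real_sum)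
  finally show ?thesis .
qed

lemma cscalar_entry: assumes "w \<in> carrier_vec n" "u \<in> carrier_vec n"
  shows "w \<bullet>c u = (\<Sum>k<n. w $ k * cnj (u $ k))"
  using assms by (auto simp: scalar_prod_def atLeast0LessThan)

lemma herm_entry: "adj A = A \<Longrightarrow> A \<in> carrier_mat n n \<Longrightarrow> i < n \<Longrightarrow> j < n \<Longrightarrow> A $$ (i,j) = cnj (A $$ (j,i))"
  by (metis adj_index carrier_matD(1) carrier_matD(2))

theorem spectral:
  assumes "A \<in> carrier_mat n n" "adj A = A"
  shows "\<exists>W r. unitary_op n W \<and> A = W * dmat n (\<lambda>i. complex_of_real (r i)) * adj W"
  using assms
proof (induction n arbitrary: A)
  case 0
  have "A = 1\<^sub>m 0 * dmat 0 (\<lambda>i. complex_of_real 0) * adj (1\<^sub>m 0)"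
  proof (rule eq_matI)
    show "dim_row A = dim_row (1\<^sub>m 0 * dmat 0 (\<lambda>i. complex_of_real 0) * adj (1\<^sub>m 0))"
      using 0 by simp
    show "dim_col A = dim_col (1\<^sub>m 0 * dmat 0 (\<lambda>i. complex_of_real 0) * adj (1\<^sub>m 0))"
      using 0 by simp
  qed simp
  then show ?case using unitary_one by (intro exI[of _ "1\<^sub>m 0"] exI[of _ "\<lambda>i. 0::real"]) simp
next
  case (Suc m A)
  define n where "n = Suc m"
  have A: "A \<in> carrier_mat n n" using Suc n_def by simp
  have hA: "adj A = A" using Suc by simp
  have "degree (char_poly A) = n" using degree_monic_char_poly[OF A] by simp
  then have "\<not> constant (poly (char_poly A))" using constant_degree[of "char_poly A"] n_def by simp
  then obtain e where "poly (char_poly A) e = 0" using fundamental_theorem_of_algebra by blast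
  then have ev: "eigenvalue A e" using eigenvalue_root_char_poly[OF A] by simp
  define v where "v = find_eigenvector A e"
  have "eigenvector A v e" unfolding v_def by (rule find_eigenvector[OF A ev])
  then have v: "v \<in> carrier_vec n" and v0: "v \<noteq> 0\<^sub>v n" and Av: "A *\<^sub>v v = e \<cdot>\<^sub>v v"
    using A unfolding eigenvector_def by auto
  interpret cof_vec_space n "TYPE(complex)" .
  define b where "b = basis_completion v"
  from basis_completion[OF v v0, folded b_def]
  have dist_b: "distinct b" and indep: "\<not> lin_dep (set b)" and b: "set b \<subseteq> carrier_vec n"
    and hdb: "hd b = v" and len_b: "length b = n" by auto
  from hdb len_b n_def obtain vs where bv: "b = v # vs" by (cases b, auto)
  define ws where "ws = gram_schmidt n b"
  from gram_schmidt_result[OF b dist_b indep refl, folded ws_def]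
  have wsc: "set ws \<subseteq> carrier_vec n" and orth: "corthogonal ws" and lws: "length ws = n"
    by (auto simp: len_b)
  from gram_schmidt_hd[OF v, of vs, folded bv] have hdws: "hd ws = v" unfolding ws_def .
  have ws0: "ws ! 0 = v" using hdws lws n_def by (cases ws) auto
  define ns where "ns j = sqrt (\<Sum>k<n. (cmod (ws ! j $ k))\<^sup>2)" for j
  have wsj: "ws ! j \<in> carrier_vec n" if "j < n" for j using wsc lws that by auto
  have nspos: "ns j > 0" if j: "j < n" for j
  proof -
    have "ws ! j \<bullet>c ws ! j \<noteq> 0" using corthogonalD[OF orth] j lws by auto
    then have "(\<Sum>k<n. (cmod (ws ! j $ k))\<^sup>2) \<noteq> 0" using cscalar_self[OF wsj[OF j]] by (auto simp del: of_real_sum of_real_power)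
    moreover have "(\<Sum>k<n. (cmod (ws ! j $ k))\<^sup>2) \<ge> 0" by (intro sum_nonneg) auto
    ultimately show ?thesis unfolding ns_def by auto
  qed
  define W0 where "W0 = mat n n (\<lambda>(i,j). ws ! j $ i / complex_of_real (ns j))"
  have W0: "W0 \<in> carrier_mat n n" unfolding W0_def by auto
  have W0adj: "adj W0 * W0 = 1\<^sub>m n"
  proof (rule eq_matI)
    fix i j assume "i < dim_row (1\<^sub>m n)" "j < dim_col (1\<^sub>m n)"
    then have ij: "i < n" "j < n" by auto
    have "(adj W0 * W0) $$ (i,j) = (\<Sum>k<n. cnj (W0 $$ (k,i)) * W0 $$ (k,j))"
      using W0 ij by (subst mult_entry[OF adj_carrier[OF W0] W0]) auto
    also have "\<dots> = (\<Sum>k<n. ws ! j $ k * cnj (ws ! i $ k)) / complex_of_real (ns i * ns j)"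
      unfolding W0_def using ij by (auto simp: sum_divide_distrib intro!: sum.cong)
    also have "\<dots> = (ws ! j \<bullet>c ws ! i) / complex_of_real (ns i * ns j)"
      using cscalar_entry[OF wsj wsj] ij by simp
    also have "\<dots> = 1\<^sub>m n $$ (i,j)"
    proof (cases "i = j")
      case True
      have "ws ! j \<bullet>c ws ! i = complex_of_real ((ns i)^2)"
        using True cscalar_self[OF wsj[OF ij(1)]] ns_def
        by (simp add: sum_nonneg)
      then show ?thesis using True ij nspos[OF ij(1)] by (simp add: power2_eq_square)
    next
      case False
      then have "ws ! j \<bullet>c ws ! i = 0" using corthogonalD[OF orth] ij lws by auto
      then show ?thesis using False ij by simp
    qed
    finally show "(adj W0 * W0) $$ (i,j) = 1\<^sub>m n $$ (i,j)" .
  qed (use W0 in auto)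
  have W0u: "unitary_op n W0"
    using mat_mult_left_right_inverse[OF adj_carrier[OF W0] W0 W0adj] W0 by (simp add: unitary_op_def)
  define B where "B = adj W0 * A * W0"
  have B: "B \<in> carrier_mat n n" unfolding B_def using W0 A by auto
  have hB: "adj B = B"
  proof -
    have X: "adj W0 * A \<in> carrier_mat n n" using A W0 by auto
    have "adj B = adj W0 * adj (adj W0 * A)" unfolding B_def by (rule adj_mult[OF X W0])
    also have "\<dots> = adj W0 * (A * W0)" using adj_mult[OF adj_carrier[OF W0] A] hA by simp
    also have "\<dots> = B" unfolding B_def by (rule assoc_mult_mat[symmetric, OF adj_carrier[OF W0] A W0])
    finally show ?thesis .
  qed
  have AW0: "(A * W0) $$ (k,0) = e * W0 $$ (k,0)" if k: "k < n" for k
  proof -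
    have "(A * W0) $$ (k,0) = (\<Sum>l<n. A $$ (k,l) * v $ l) / complex_of_real (ns 0)"
      using A W0 k n_def ws0 by (subst mult_entry[OF A W0]) (auto simp: W0_def sum_divide_distrib add_divide_distrib)
    also have "(\<Sum>l<n. A $$ (k,l) * v $ l) = (A *\<^sub>v v) $ k"
      using A v k by (auto simp: scalar_prod_def row_def atLeast0LessThan)
    also have "\<dots> = e * v $ k" using Av v k by simp
    finally show ?thesis using k n_def ws0 by (simp add: W0_def)
  qed
  have Bcol: "B $$ (i,0) = (if i = 0 then e else 0)" if i: "i < n" for i
  proof -
    have "B $$ (i,0) = (adj W0 * (A * W0)) $$ (i,0)" unfolding B_def using assoc_mult_mat[OF adj_carrier[OF W0] A W0] by simp
    also have "\<dots> = (\<Sum>k<n. adj W0 $$ (i,k) * (A * W0) $$ (k,0))"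
      using A W0 i n_def by (subst mult_entry[of _ n n _ n]) auto
    also have "\<dots> = e * (\<Sum>k<n. adj W0 $$ (i,k) * W0 $$ (k,0))"
      by (simp add: AW0 sum_distrib_left mult.commute mult.left_commute)
    also have "(\<Sum>k<n. adj W0 $$ (i,k) * W0 $$ (k,0)) = (adj W0 * W0) $$ (i,0)"
      using A W0 i n_def by (subst mult_entry[of _ n n _ n]) auto
    also have "\<dots> = (if i = 0 then 1 else 0)" using W0adj i n_def by simp
    finally show ?thesis by simp
  qed
  have ereal: "e = complex_of_real (Re e)"
  proof -
    have "B $$ (0,0) = cnj (B $$ (0,0))" by (rule herm_entry[OF hB B]) (simp_all add: n_def)
    then have "e = cnj e" using Bcol n_def by simp
    then have "Im e = Im (cnj e)" by (rule arg_cong)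
    then have "Im e = 0" by simp
    then show ?thesis by (simp add: complex_eq_iff)
  qed
  have Brow: "B $$ (0,j) = (if j = 0 then e else 0)" if j: "j < n" for j
  proof -
    have "B $$ (0,j) = cnj (B $$ (j,0))" by (rule herm_entry[OF hB B]) (use j n_def in simp_all)
    moreover have "cnj e = e" by (metis ereal complex_cnj_complex_of_real)
    ultimately show ?thesis using Bcol[OF j] by simp
  qed
  define B2 where "B2 = mat m m (\<lambda>(i,j). B $$ (Suc i, Suc j))"
  have B2: "B2 \<in> carrier_mat m m" unfolding B2_def by simp
  have hB2: "adj B2 = B2"
  proof (rule eq_matI)
    fix i j assume "i < dim_row B2" "j < dim_col B2"
    then have ij: "i < m" "j < m" using B2 by auto
    have "B $$ (Suc i, Suc j) = cnj (B $$ (Suc j, Suc i))" by (rule herm_entry[OF hB B]) (use ij n_def in simp_all)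
    then show "adj B2 $$ (i,j) = B2 $$ (i,j)" using ij by (simp add: B2_def)
  qed (auto simp: B2_def)
  from Suc.IH[OF B2 hB2] obtain W2 r2 where W2u: "unitary_op m W2"
    and B2eq: "B2 = W2 * dmat m (\<lambda>i. complex_of_real (r2 i)) * adj W2" by blast
  have W2: "W2 \<in> carrier_mat m m" using W2u unitary_carrier by blast
  define Wb where "Wb = mat n n (\<lambda>(i,j). if i = 0 \<and> j = 0 then 1 else if i = 0 \<or> j = 0 then 0 else W2 $$ (i - 1, j - 1))"
  have Wb: "Wb \<in> carrier_mat n n" unfolding Wb_def by simp
  have Wbu: "unitary_op n Wb"
  proof -
    have "Wb * adj Wb = 1\<^sub>m n"
    proof (rule eq_matI)
      fix i j assume "i < dim_row (1\<^sub>m n)" "j < dim_col (1\<^sub>m n)"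
      then have ij: "i < n" "j < n" by auto
      have "(Wb * adj Wb) $$ (i,j) = (\<Sum>k<Suc m. Wb $$ (i,k) * cnj (Wb $$ (j,k)))"
        using Wb ij n_def by (subst mult_entry[OF Wb adj_carrier[OF Wb]]) auto
      also have "\<dots> = Wb $$ (i,0) * cnj (Wb $$ (j,0)) + (\<Sum>k<m. Wb $$ (i,Suc k) * cnj (Wb $$ (j,Suc k)))"
        by (rule sum.lessThan_Suc_shift)
      also have "\<dots> = 1\<^sub>m n $$ (i,j)"
      proof (cases "i = 0 \<or> j = 0")
        case True
        then show ?thesis using ij n_def by (auto simp: Wb_def)
      next
        case False
        then obtain i' j' where ii: "i = Suc i'" "j = Suc j'" by (cases i; cases j) auto
        have "(\<Sum>k<m. Wb $$ (i,Suc k) * cnj (Wb $$ (j,Suc k))) = (\<Sum>k<m. W2 $$ (i',k) * cnj (W2 $$ (j',k)))"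
          using ij ii n_def by (auto simp: Wb_def)
        also have "\<dots> = (W2 * adj W2) $$ (i',j')"
          using W2 ij ii n_def by (subst mult_entry[OF W2 adj_carrier[OF W2]]) auto
        also have "\<dots> = 1\<^sub>m m $$ (i',j')" using unitary_right[OF W2u] by simp
        finally show ?thesis using ij ii n_def False by (auto simp: Wb_def)
      qed
      finally show "(Wb * adj Wb) $$ (i,j) = 1\<^sub>m n $$ (i,j)" .
    qed (use Wb in auto)
    then show ?thesis using Wb by (simp add: unitary_op_def)
  qed
  define r where "r i = (if i = 0 then Re e else r2 (i - 1))" for i
  have Beq: "B = Wb * dmat n (\<lambda>i. complex_of_real (r i)) * adj Wb"
  proof (rule eq_matI)
    fix i j assume "i < dim_row (Wb * dmat n (\<lambda>i. complex_of_real (r i)) * adj Wb)"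
      "j < dim_col (Wb * dmat n (\<lambda>i. complex_of_real (r i)) * adj Wb)"
    then have ij: "i < n" "j < n" using Wb by auto
    have "(Wb * dmat n (\<lambda>i. complex_of_real (r i)) * adj Wb) $$ (i,j)
       = (\<Sum>k<Suc m. Wb $$ (i,k) * complex_of_real (r k) * cnj (Wb $$ (j,k)))"
      using WDW_entry[OF Wb ij] n_def by simp
    also have "\<dots> = Wb $$ (i,0) * complex_of_real (r 0) * cnj (Wb $$ (j,0)) +
        (\<Sum>k<m. Wb $$ (i,Suc k) * complex_of_real (r (Suc k)) * cnj (Wb $$ (j,Suc k)))"
      by (rule sum.lessThan_Suc_shift)
    also have "\<dots> = B $$ (i,j)"
    proof (cases "i = 0 \<or> j = 0")
      case True
      then show ?thesis using ij n_def Bcol Brow ereal by (auto simp: Wb_def r_def)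
    next
      case False
      then obtain i' j' where ii: "i = Suc i'" "j = Suc j'" by (cases i; cases j) auto
      have "(\<Sum>k<m. Wb $$ (i,Suc k) * complex_of_real (r (Suc k)) * cnj (Wb $$ (j,Suc k)))
         = (\<Sum>k<m. W2 $$ (i',k) * complex_of_real (r2 k) * cnj (W2 $$ (j',k)))"
        using ij ii n_def by (auto simp: Wb_def r_def)
      also have "\<dots> = B2 $$ (i',j')" using B2eq WDW_entry[OF W2] ij ii n_def by simp
      also have "\<dots> = B $$ (i,j)" using ij ii n_def by (simp add: B2_def)
      finally show ?thesis using ii ij n_def by (simp add: Wb_def)
    qed
    finally show "B $$ (i,j) = (Wb * dmat n (\<lambda>i. complex_of_real (r i)) * adj Wb) $$ (i,j)" by simp
  qed (use B Wb in auto)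
  define D where "D = dmat n (\<lambda>i. complex_of_real (r i))"
  have D: "D \<in> carrier_mat n n" unfolding D_def by simp
  have W0r: "W0 * adj W0 = 1\<^sub>m n" using unitary_right[OF W0u] .
  have "A = (W0 * adj W0) * A * (W0 * adj W0)" using W0r A by simp
  also have "\<dots> = W0 * B * adj W0" unfolding B_def using W0 A
    by (simp add: sq_assoc[of _ n] sq_mult sq_adj)
  also have "\<dots> = W0 * (Wb * D * adj Wb) * adj W0" using Beq D_def by simp
  also have "\<dots> = (W0 * Wb) * D * adj (W0 * Wb)" using W0 Wb D
    by (simp add: adj_mult[OF W0 Wb] sq_assoc[of _ n] sq_mult sq_adj)
  finally have "A = (W0 * Wb) * D * adj (W0 * Wb)" .
  then show ?case using unitary_mult[OF W0u Wbu] unfolding D_def n_def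
    by (intro exI[of _ "W0 * Wb"] exI[of _ r]) simp
qed


lemma proots_linprod: "proots (\<Prod>a\<leftarrow>xs. [:- a, 1:]) = mset (xs :: complex list)"
proof (induction xs)
  case Nil then show ?case by simp
next
  case (Cons x xs)
  have "(\<Prod>a\<leftarrow>xs. [:- a, 1:]) \<noteq> 0" by (auto simp: prod_list_zero_iff)
  then show ?case using Cons by (simp add: proots_mult del: mult_pCons_left)
qed

lemma WDW_carrier: "W \<in> carrier_mat n n \<Longrightarrow> W * dmat n f * adj W \<in> carrier_mat n n"
  by auto

lemma proots_WDW: assumes "unitary_op n W"
  shows "proots (char_poly (W * dmat n f * adj W)) = mset (map f [0..<n])"
proof -
  have W: "W \<in> carrier_mat n n" using assms unitary_carrier by blast
  have "similar_mat (W * dmat n f * adj W) (dmat n f)"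
    unfolding similar_mat_def similar_mat_wit_def
    using W unitary_right[OF assms] unitary_left[OF assms]
    by (intro exI[of _ W] exI[of _ "adj W"] exI[of _ n]) auto
  then have "char_poly (W * dmat n f * adj W) = char_poly (dmat n f)" by (rule char_poly_similar)
  also have "\<dots> = (\<Prod>a\<leftarrow>diag_mat (dmat n f). [:- a, 1:])"
    by (rule char_poly_upper_triangular[of _ n]) (auto simp: upper_triangular_def)
  also have "diag_mat (dmat n f) = map f [0..<n]"
    by (auto simp: diag_mat_def intro!: nth_equalityI)
  finally show ?thesis by (simp only: proots_linprod)
qed

lemma entropy_WDW: assumes "unitary_op n W"
  shows "vN_entropy \<beta> (W * dmat n (\<lambda>i. complex_of_real (r i)) * adj W) = - (\<Sum>i<n. r i * log \<beta> (r i))"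
proof -
  have "sum_mset (image_mset (\<lambda>z. Re z * log \<beta> (Re z)) (mset (map (\<lambda>i. complex_of_real (r i)) [0..<n])))
      = sum_list (map (\<lambda>i. r i * log \<beta> (r i)) [0..<n])"
    by (simp only: mset_map[symmetric] sum_mset_sum_list map_map) (simp add: comp_def)
  also have "\<dots> = (\<Sum>i<n. r i * log \<beta> (r i))"
    by (simp only: sum_set_upt_conv_sum_list_nat[symmetric] set_upt atLeast0LessThan)
  finally show ?thesis unfolding vN_entropy_def proots_WDW[OF assms] by simp
qed

definition pmat :: "nat \<Rightarrow> (nat \<Rightarrow> nat) \<Rightarrow> complex mat" where
  "pmat n f = mat n n (\<lambda>(k,i). if k = f i then 1 else 0)"

lemma pmat_conj: assumes f: "bij_betw f {..<n} {..<n}"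
  shows "pmat n f * dmat n (\<lambda>i. g (f i)) * adj (pmat n f) = dmat n g"
proof (rule eq_matI)
  have P: "pmat n f \<in> carrier_mat n n" by (simp add: pmat_def)
  fix k l assume "k < dim_row (dmat n g)" "l < dim_col (dmat n g)"
  then have kl: "k < n" "l < n" by auto
  have "(pmat n f * dmat n (\<lambda>i. g (f i)) * adj (pmat n f)) $$ (k,l)
      = (\<Sum>i<n. (\<lambda>x. (if k = x then 1 else 0) * g x * (if l = x then 1 else 0)) (f i))"
    using WDW_entry[OF P kl] kl f by (intro trans[OF WDW_entry[OF P kl]] sum.cong) (auto simp: pmat_def bij_betw_def)
  also have "\<dots> = (\<Sum>x<n. (if k = x then 1 else 0) * g x * (if l = x then 1 else 0))"
    by (rule sum.reindex_bij_betw[OF f])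
  also have "\<dots> = dmat n g $$ (k,l)" using kl by (auto simp: if_distrib cong: if_cong)
  finally show "(pmat n f * dmat n (\<lambda>i. g (f i)) * adj (pmat n f)) $$ (k,l) = dmat n g $$ (k,l)" .
qed (auto simp: pmat_def)

lemma pmat_unitary: assumes f: "bij_betw f {..<n} {..<n}"
  shows "unitary_op n (pmat n f)"
proof -
  have "dmat n (\<lambda>i. 1) = 1\<^sub>m n" by (rule eq_matI) auto
  moreover have "pmat n f * 1\<^sub>m n = pmat n f" by (simp add: pmat_def)
  ultimately show ?thesis using pmat_conj[OF f, of "\<lambda>i. 1"]
    by (auto simp: unitary_op_def pmat_def)
qed

lemma spectral_ordered:
  assumes A: "A \<in> carrier_mat n n" and h: "adj A = A"
    and p: "mset (map complex_of_real p) = proots (char_poly A)"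
  shows "length p = n \<and> (\<exists>W. unitary_op n W \<and> A = W * dmat n (\<lambda>i. complex_of_real (p ! i)) * adj W)"
proof -
  obtain W r where Wu: "unitary_op n W" and Aeq: "A = W * dmat n (\<lambda>i. complex_of_real (r i)) * adj W"
    using spectral[OF A h] by blast
  have "mset (map complex_of_real p) = proots (char_poly (W * dmat n (\<lambda>i. complex_of_real (r i)) * adj W))"
    using p Aeq by simp
  also have "\<dots> = mset (map (\<lambda>i. complex_of_real (r i)) [0..<n])" by (rule proots_WDW[OF Wu])
  finally have "image_mset Re (mset (map complex_of_real p)) = image_mset Re (mset (map (\<lambda>i. complex_of_real (r i)) [0..<n]))"
    by simp
  then have mp: "mset p = mset (map r [0..<n])" by (simp add: multiset.map_comp comp_def)
  then have lp: "length p = n" by (metis length_map length_upt minus_nat.diff_0 size_mset)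
  obtain f where fp: "f permutes {..<length (map r [0..<n])}" and pl: "permute_list f (map r [0..<n]) = p"
    using mset_eq_permutation[OF mp] by blast
  have fb: "bij_betw f {..<n} {..<n}" using fp permutes_imp_bij by fastforce
  have pi: "p ! i = r (f i)" if "i < n" for i
  proof -
    have "p ! i = permute_list f (map r [0..<n]) ! i" using pl by simp
    also have "\<dots> = map r [0..<n] ! f i" by (rule permute_list_nth) (use fp that in auto)
    also have "\<dots> = r (f i)" using permutes_in_image[OF fp] that by simp
    finally show ?thesis .
  qed
  have W': "unitary_op n (W * pmat n f)" using unitary_mult[OF Wu pmat_unitary[OF fb]] .
  have Wc: "W \<in> carrier_mat n n" using Wu unitary_carrier by blast
  have Pc: "pmat n f \<in> carrier_mat n n" by (simp add: pmat_def)
  have D: "dmat n (\<lambda>i. complex_of_real (p ! i)) = dmat n (\<lambda>i. complex_of_real (r (f i)))"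
    by (rule eq_matI) (auto simp: pi)
  have "W * pmat n f * dmat n (\<lambda>i. complex_of_real (p ! i)) * adj (W * pmat n f)
     = W * (pmat n f * dmat n (\<lambda>i. complex_of_real (r (f i))) * adj (pmat n f)) * adj W"
    unfolding D using Wc Pc by (simp add: adj_mult[OF Wc Pc] sq_assoc[of _ n] sq_mult sq_adj)
  also have "\<dots> = A" using pmat_conj[OF fb, of "\<lambda>i. complex_of_real (r i)"] Aeq by simp
  finally show ?thesis using lp W' by metis
qed


lemma xlog_tangent:
  fixes \<beta> x y :: real
  assumes b: "\<beta> > 1" and x: "x > 0" and y: "y \<ge> 0"
  shows "y * log \<beta> y \<ge> x * log \<beta> x + (log \<beta> x + 1 / ln \<beta>) * (y - x)"
proof -
  have lb: "ln \<beta> > 0" using b by simp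
  have key: "y * ln y \<ge> x * ln x + (ln x + 1) * (y - x)"
  proof (cases "y = 0")
    case True then show ?thesis using x by simp
  next
    case False
    then have yp: "y > 0" using y by simp
    have "ln (x / y) \<le> x / y - 1" using x yp by (intro ln_le_minus_one) auto
    then have "ln x - ln y \<le> x / y - 1" using x yp by (simp add: ln_div)
    then have "y * (ln x - ln y) \<le> y * (x / y - 1)" using yp by (intro mult_left_mono) auto
    moreover have "y * (x / y - 1) = x - y" using yp by (simp add: field_simps)
    ultimately have "y * (ln x - ln y) \<le> x - y" by simp
    then show ?thesis by (simp add: algebra_simps)
  qed
  have "x * log \<beta> x + (log \<beta> x + 1 / ln \<beta>) * (y - x) = (x * ln x + (ln x + 1) * (y - x)) / ln \<beta>"
    using lb by (simp add: log_def field_simps)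
  also have "\<dots> \<le> (y * ln y) / ln \<beta>" using key lb by (intro divide_right_mono) auto
  also have "\<dots> = y * log \<beta> y" by (simp add: log_def)
  finally show ?thesis .
qed

lemma abel_bound:
  fixes g d :: "nat \<Rightarrow> real"
  assumes mono: "\<And>i j. i \<le> j \<Longrightarrow> j \<le> n \<Longrightarrow> g j \<le> g i"
    and D: "\<And>m. m \<le> Suc n \<Longrightarrow> 0 \<le> (\<Sum>i<m. d i)"
  shows "(\<Sum>i<Suc n. g i * d i) \<ge> g n * (\<Sum>i<Suc n. d i)"
  using assms
proof (induction n)
  case 0 then show ?case by simp
next
  case (Suc n)
  have IH: "(\<Sum>i<Suc n. g i * d i) \<ge> g n * (\<Sum>i<Suc n. d i)"
    using Suc.prems by (intro Suc.IH) auto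
  have "g (Suc n) * (\<Sum>i<Suc n. d i) \<le> g n * (\<Sum>i<Suc n. d i)"
    using Suc.prems(1)[of n "Suc n"] Suc.prems(2)[of "Suc n"] by (intro mult_right_mono) auto
  then show ?case using IH by (simp add: algebra_simps)
qed

lemma karamata_pos:
  fixes r Q :: "nat \<Rightarrow> real"
  assumes b: "\<beta> > 1"
    and rpos: "\<And>i. i < n \<Longrightarrow> r i > 0" and Qnn: "\<And>i. i < n \<Longrightarrow> Q i \<ge> 0"
    and rdesc: "\<And>i j. i \<le> j \<Longrightarrow> j < n \<Longrightarrow> r j \<le> r i"
    and part: "\<And>m. m \<le> n \<Longrightarrow> (\<Sum>i<m. r i) \<le> (\<Sum>i<m. Q i)"
    and tot: "(\<Sum>i<n. r i) = (\<Sum>i<n. Q i)"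
  shows "(\<Sum>i<n. r i * log \<beta> (r i)) \<le> (\<Sum>i<n. Q i * log \<beta> (Q i))"
proof (cases n)
  case 0 then show ?thesis by simp
next
  case (Suc n')
  define g where "g i = log \<beta> (r i) + 1 / ln \<beta>" for i
  have tan: "Q i * log \<beta> (Q i) - r i * log \<beta> (r i) \<ge> g i * (Q i - r i)" if "i < n" for i
    using xlog_tangent[OF b rpos[OF that] Qnn[OF that]] unfolding g_def by simp
  have "(\<Sum>i<Suc n'. g i * (Q i - r i)) \<ge> g n' * (\<Sum>i<Suc n'. Q i - r i)"
  proof (rule abel_bound)
    show "g j \<le> g i" if "i \<le> j" "j \<le> n'" for i j
      using rdesc[of i j] that rpos[of j] Suc b unfolding g_def by simp
    show "0 \<le> (\<Sum>i<m. Q i - r i)" if "m \<le> Suc n'" for m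
      using part[of m] that Suc by (simp add: sum_subtractf)
  qed
  moreover have "(\<Sum>i<Suc n'. Q i - r i) = 0" using tot Suc by (simp add: sum_subtractf)
  ultimately have "(\<Sum>i<n. g i * (Q i - r i)) \<ge> 0" using Suc by simp
  also have "(\<Sum>i<n. g i * (Q i - r i)) \<le> (\<Sum>i<n. Q i * log \<beta> (Q i) - r i * log \<beta> (r i))"
    by (intro sum_mono tan) auto
  finally show ?thesis by (simp add: sum_subtractf)
qed

lemma karamata:
  fixes r Q :: "nat \<Rightarrow> real"
  assumes b: "\<beta> > 1"
    and rnn: "\<And>i. i < n \<Longrightarrow> r i \<ge> 0" and Qnn: "\<And>i. i < n \<Longrightarrow> Q i \<ge> 0"
    and rdesc: "\<And>i j. i \<le> j \<Longrightarrow> j < n \<Longrightarrow> r j \<le> r i"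
    and part: "\<And>m. m \<le> n \<Longrightarrow> (\<Sum>i<m. r i) \<le> (\<Sum>i<m. Q i)"
    and tot: "(\<Sum>i<n. r i) = (\<Sum>i<n. Q i)"
  shows "(\<Sum>i<n. r i * log \<beta> (r i)) \<le> (\<Sum>i<n. Q i * log \<beta> (Q i))"
proof -
  define k where "k = (if \<exists>i<n. r i = 0 then (LEAST i. i < n \<and> r i = 0) else n)"
  have kn: "k \<le> n" unfolding k_def by (auto intro: Least_le[THEN order_trans] dest: LeastI_ex)
  have rposk: "r i > 0" if "i < k" for i
  proof -
    have "i < n" using that kn by simp
    moreover have "r i \<noteq> 0"
    proof
      assume "r i = 0"
      then have "(LEAST i. i < n \<and> r i = 0) \<le> i" using \<open>i < n\<close> by (intro Least_le) auto
      moreover have "\<exists>i<n. r i = 0" using \<open>i < n\<close> \<open>r i = 0\<close> by blast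
      ultimately show False using that unfolding k_def by simp
    qed
    ultimately show ?thesis using rnn[of i] by simp
  qed
  have rzero: "r i = 0" if "k \<le> i" "i < n" for i
  proof -
    have "\<exists>i<n. r i = 0" using that kn unfolding k_def by (auto split: if_splits)
    then have "\<exists>i. i < n \<and> r i = 0" by blast
    from LeastI_ex[OF this] have kk: "k < n \<and> r k = 0" unfolding k_def using \<open>\<exists>i<n. r i = 0\<close> by simp
    then show ?thesis using rdesc[of k i] rnn[of i] that by simp
  qed
  have split: "(\<Sum>i<n. f i) = (\<Sum>i<k. f i) + (\<Sum>i\<in>{k..<n}. f i)" for f :: "nat \<Rightarrow> real"
    using kn by (metis atLeast0LessThan sum.atLeastLessThan_concat zero_le)
  have rtail: "(\<Sum>i\<in>{k..<n}. r i) = 0" using rzero by simp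
  have "(\<Sum>i\<in>{k..<n}. Q i) \<le> 0"
    using part[OF kn] tot split[of r] split[of Q] rtail by linarith
  moreover have "(\<Sum>i\<in>{k..<n}. Q i) \<ge> 0" using Qnn by (intro sum_nonneg) auto
  ultimately have s0: "(\<Sum>i\<in>{k..<n}. Q i) = 0" by simp
  have Qzero: "Q i = 0" if "k \<le> i" "i < n" for i
    using that Qnn sum_nonneg_eq_0_iff[of "{k..<n}" Q] s0 by auto
  have "(\<Sum>i<k. r i * log \<beta> (r i)) \<le> (\<Sum>i<k. Q i * log \<beta> (Q i))"
  proof (rule karamata_pos[OF b])
    show "(\<Sum>i<k. r i) = (\<Sum>i<k. Q i)"
      using tot split[of r] split[of Q] rtail Qzero by simp
  qed (use rposk Qnn rdesc part kn in auto)
  then show ?thesis using split[of "\<lambda>i. r i * log \<beta> (r i)"] split[of "\<lambda>i. Q i * log \<beta> (Q i)"]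
    rzero Qzero by simp
qed

lemma knapsack:
  fixes a w :: "nat \<Rightarrow> real"
  assumes adesc: "\<And>i j. i \<le> j \<Longrightarrow> j < n \<Longrightarrow> a j \<le> a i"
    and ann: "\<And>i. i < n \<Longrightarrow> a i \<ge> 0"
    and w01: "\<And>i. i < n \<Longrightarrow> 0 \<le> w i \<and> w i \<le> 1"
    and wsum: "(\<Sum>i<n. w i) \<le> real T" and Tn: "T \<le> n"
  shows "(\<Sum>i<n. a i * w i) \<le> (\<Sum>i<T. a i)"
proof (cases "T = n")
  case True
  have "a i * w i \<le> a i" if "i < n" for i using w01[OF that] ann[OF that] by (simp add: mult_left_le)
  then show ?thesis unfolding True by (intro sum_mono) auto
next
  case False
  then have Tl: "T < n" using Tn by simp
  have split: "(\<Sum>i<n. f i) = (\<Sum>i<T. f i) + (\<Sum>i\<in>{T..<n}. f i)" for f :: "nat \<Rightarrow> real"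
    using Tn by (metis atLeast0LessThan sum.atLeastLessThan_concat zero_le)
  have s1: "(\<Sum>i<T. a i * w i) \<le> (\<Sum>i<T. a i + a T * (w i - 1))"
  proof (rule sum_mono)
    fix i assume "i \<in> {..<T}"
    then have "a T \<le> a i" "w i - 1 \<le> 0" using adesc[of i T] Tl w01[of i] by auto
    then have "a i * (w i - 1) \<le> a T * (w i - 1)" by (intro mult_right_mono_neg) auto
    then show "a i * w i \<le> a i + a T * (w i - 1)" by (simp add: algebra_simps)
  qed
  have s2: "(\<Sum>i\<in>{T..<n}. a i * w i) \<le> (\<Sum>i\<in>{T..<n}. a T * w i)"
  proof (rule sum_mono)
    fix i assume "i \<in> {T..<n}"
    then show "a i * w i \<le> a T * w i" using adesc[of T i] w01[of i] by (intro mult_right_mono) auto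
  qed
  have "(\<Sum>i<n. a i * w i) \<le> (\<Sum>i<T. a i) + a T * ((\<Sum>i<T. w i) - T + (\<Sum>i\<in>{T..<n}. w i))"
    using s1 s2 split[of "\<lambda>i. a i * w i"]
    by (simp add: sum.distrib sum_distrib_left[symmetric] sum_subtractf algebra_simps)
  also have "\<dots> \<le> (\<Sum>i<T. a i)"
    using split[of w] wsum ann[of T] Tl by (simp add: mult_nonneg_nonpos)
  finally show ?thesis .
qed


definition ptr :: "nat \<Rightarrow> nat \<Rightarrow> (nat \<Rightarrow> nat) \<Rightarrow> (nat \<Rightarrow> 'k) \<Rightarrow> complex mat \<Rightarrow> complex mat" where
  "ptr d n \<beta> \<kappa> \<sigma> = mat n n (\<lambda>(i,j). \<Sum>a<d. \<Sum>b<d.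
      if \<beta> a = i \<and> \<beta> b = j \<and> \<kappa> a = \<kappa> b then \<sigma> $$ (a,b) else 0)"

lemma ptr_carrier[simp]: "ptr d n \<beta> \<kappa> \<sigma> \<in> carrier_mat n n"
  by (simp add: ptr_def)

lemma ptr_index: "i < n \<Longrightarrow> j < n \<Longrightarrow> ptr d n \<beta> \<kappa> \<sigma> $$ (i,j) = (\<Sum>a<d. \<Sum>b<d.
      if \<beta> a = i \<and> \<beta> b = j \<and> \<kappa> a = \<kappa> b then \<sigma> $$ (a,b) else 0)"
  by (simp add: ptr_def)

lemma ptr_dmat: "ptr d n \<beta> \<kappa> (dmat d h) = dmat n (\<lambda>i. \<Sum>a\<in>{a. a < d \<and> \<beta> a = i}. h a)"
proof (rule eq_matI)
  fix i j assume "i < dim_row (dmat n (\<lambda>i. \<Sum>a\<in>{a. a < d \<and> \<beta> a = i}. h a))"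
    "j < dim_col (dmat n (\<lambda>i. \<Sum>a\<in>{a. a < d \<and> \<beta> a = i}. h a))"
  then have ij: "i < n" "j < n" by auto
  have "ptr d n \<beta> \<kappa> (dmat d h) $$ (i,j) = (\<Sum>a<d. if \<beta> a = i \<and> \<beta> a = j then h a else 0)"
    unfolding ptr_index[OF ij]
  proof (rule sum.cong[OF refl])
    fix a assume a: "a \<in> {..<d}"
    have "(\<Sum>b<d. if \<beta> a = i \<and> \<beta> b = j \<and> \<kappa> a = \<kappa> b then dmat d h $$ (a, b) else 0)
        = (\<Sum>b<d. if b = a then (if \<beta> a = i \<and> \<beta> a = j then h a else 0) else 0)"
      using a by (intro sum.cong) auto
    also have "\<dots> = (if \<beta> a = i \<and> \<beta> a = j then h a else 0)" using a by simp
    finally show "(\<Sum>b<d. if \<beta> a = i \<and> \<beta> b = j \<and> \<kappa> a = \<kappa> b then dmat d h $$ (a, b) else 0)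
        = (if \<beta> a = i \<and> \<beta> a = j then h a else 0)" .
  qed
  also have "\<dots> = dmat n (\<lambda>i. \<Sum>a\<in>{a. a < d \<and> \<beta> a = i}. h a) $$ (i,j)"
  proof (cases "i = j")
    case True
    have "(\<Sum>a<d. if \<beta> a = i \<and> \<beta> a = j then h a else 0) = (\<Sum>a\<in>{a\<in>{..<d}. \<beta> a = i \<and> \<beta> a = j}. h a)"
      by (rule sum.mono_neutral_cong_right) auto
    also have "{a\<in>{..<d}. \<beta> a = i \<and> \<beta> a = j} = {a. a < d \<and> \<beta> a = i}" using True by auto
    finally show ?thesis using ij True by simp
  next
    case False
    have "(\<Sum>a<d. if \<beta> a = i \<and> \<beta> a = j then h a else 0) = 0" using False by (intro sum.neutral) auto
    then show ?thesis using ij False by simp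
  qed
  finally show "ptr d n \<beta> \<kappa> (dmat d h) $$ (i,j) = dmat n (\<lambda>i. \<Sum>a\<in>{a. a < d \<and> \<beta> a = i}. h a) $$ (i,j)" .
qed (auto simp: ptr_def)

lemma group_sq:
  fixes z :: "nat \<Rightarrow> complex" and \<kappa> :: "nat \<Rightarrow> 'k"
  assumes A: "finite A"
  shows "(\<Sum>a\<in>A. \<Sum>b\<in>A. if \<kappa> a = \<kappa> b then z a * cnj (z b) else 0)
     = complex_of_real (\<Sum>k\<in>\<kappa> ` A. (cmod (\<Sum>a\<in>{a\<in>A. \<kappa> a = k}. z a))\<^sup>2)"
proof -
  define Z where "Z k = (\<Sum>a\<in>{a\<in>A. \<kappa> a = k}. z a)" for k
  have "(\<Sum>a\<in>A. \<Sum>b\<in>A. if \<kappa> a = \<kappa> b then z a * cnj (z b) else 0) = (\<Sum>a\<in>A. z a * cnj (Z (\<kappa> a)))"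
  proof (rule sum.cong[OF refl])
    fix a assume "a \<in> A"
    have "(\<Sum>b\<in>A. if \<kappa> a = \<kappa> b then z a * cnj (z b) else 0) = (\<Sum>b\<in>{b\<in>A. \<kappa> a = \<kappa> b}. z a * cnj (z b))"
      by (simp add: sum.inter_filter[OF A])
    also have "\<dots> = (\<Sum>b\<in>{b\<in>A. \<kappa> b = \<kappa> a}. z a * cnj (z b))" by (rule sum.cong) auto
    also have "\<dots> = z a * cnj (Z (\<kappa> a))" by (simp add: Z_def sum_distrib_left cnj_sum)
    finally show "(\<Sum>b\<in>A. if \<kappa> a = \<kappa> b then z a * cnj (z b) else 0) = z a * cnj (Z (\<kappa> a))" .
  qed
  also have "\<dots> = (\<Sum>k\<in>\<kappa> ` A. \<Sum>a\<in>{a\<in>A. \<kappa> a = k}. z a * cnj (Z (\<kappa> a)))"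
    by (rule sum.image_gen[OF A])
  also have "\<dots> = (\<Sum>k\<in>\<kappa> ` A. Z k * cnj (Z k))"
    by (intro sum.cong refl) (simp add: Z_def sum_distrib_right)
  also have "\<dots> = (\<Sum>k\<in>\<kappa> ` A. complex_of_real ((cmod (Z k))\<^sup>2))"
    by (intro sum.cong refl) (metis complex_norm_square)
  also have "\<dots> = complex_of_real (\<Sum>k\<in>\<kappa> ` A. (cmod (Z k))\<^sup>2)" by (simp only: of_real_sum)
  finally show ?thesis unfolding Z_def .
qed

lemma sum_lessThan_add: "(\<Sum>t<x + y. h t) = (\<Sum>t<x. h t) + (\<Sum>a<y. h (x + a))" for h :: "nat \<Rightarrow> 'a::comm_monoid_add"
  by (induction y) (simp_all add: add.assoc)

lemma img_shift: "(\<lambda>a. x + a) ` {..<y} = {x..<x + (y::nat)}"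
  using image_add_atLeastLessThan[of x 0 y] by (simp add: add.commute lessThan_atLeast0)

lemma sum_ivl_shift: "(\<Sum>t\<in>{x..<x + y}. h t) = (\<Sum>a<y. h (x + a))" for h :: "nat \<Rightarrow> 'a::comm_monoid_add"
proof -
  have "{x..<x + y} = (\<lambda>a. x + a) ` {..<y}" by (simp add: img_shift)
  then show ?thesis by (simp add: sum.reindex inj_on_def)
qed

definition bstart :: "nat list \<Rightarrow> nat \<Rightarrow> nat" where
  "bstart g u = sum_list (take u g)"

lemma bstart_Suc: "u < length g \<Longrightarrow> bstart g (Suc u) = bstart g u + g ! u"
  by (simp add: bstart_def take_Suc_conv_app_nth)

lemma bstart_le: "bstart g u \<le> sum_list g"
proof -
  have "sum_list (take u g) \<le> sum_list (take u g) + sum_list (drop u g)" by simp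
  also have "\<dots> = sum_list g" by (metis append_take_drop_id sum_list_append)
  finally show ?thesis by (simp add: bstart_def)
qed

lemma bstart_len: "bstart g (length g) = sum_list g"
  by (simp add: bstart_def)

lemma sum_blocks:
  fixes h :: "nat \<Rightarrow> 'a::comm_monoid_add"
  assumes "m \<le> length g"
  shows "(\<Sum>t<bstart g m. h t) = (\<Sum>u<m. \<Sum>a<g ! u. h (bstart g u + a))"
  using assms
proof (induction m)
  case 0 then show ?case by (simp add: bstart_def)
next
  case (Suc m)
  then show ?case by (simp add: bstart_Suc sum_lessThan_add)
qed

lemma block_bij:
  assumes F: "\<And>u. u < length g \<Longrightarrow> finite (F u) \<and> card (F u) = g ! u"
    and disj: "\<And>u v. u < length g \<Longrightarrow> v < length g \<Longrightarrow> u \<noteq> v \<Longrightarrow> F u \<inter> F v = {}"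
    and m: "m \<le> length g"
  shows "\<exists>\<tau>. bij_betw \<tau> {..<bstart g m} (\<Union>u<m. F u) \<and>
      (\<forall>u<m. \<tau> ` {bstart g u..<bstart g u + g ! u} = F u)"
  using m
proof (induction m)
  case 0 then show ?case by (simp add: bstart_def bij_betw_def)
next
  case (Suc m)
  then obtain \<tau> where tb: "bij_betw \<tau> {..<bstart g m} (\<Union>u<m. F u)"
    and timg: "\<forall>u<m. \<tau> ` {bstart g u..<bstart g u + g ! u} = F u" by auto
  have ml: "m < length g" using Suc by simp
  obtain h where hb: "bij_betw h {..<g ! m} (F m)"
    using finite_same_card_bij[of "{..<g ! m}" "F m"] F[OF ml] by auto
  define x where "x = bstart g m"
  define \<tau>' where "\<tau>' t = (if t < x then \<tau> t else h (t - x))" for t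
  have b1: "bij_betw \<tau>' {..<x} (\<Union>u<m. F u)"
    using tb unfolding x_def by (rule bij_betw_cong[THEN iffD1, rotated]) (auto simp: \<tau>'_def x_def)
  have sh: "bij_betw (\<lambda>t. t - x) {x..<x + g ! m} {..<g ! m}"
  proof -
    have "bij_betw (\<lambda>a. x + a) {..<g ! m} {x..<x + g ! m}"
      unfolding bij_betw_def inj_on_def by (simp add: img_shift)
    then have "bij_betw (inv_into {..<g ! m} (\<lambda>a. x + a)) {x..<x + g ! m} {..<g ! m}"
      by (rule bij_betw_inv_into)
    moreover have "inv_into {..<g ! m} (\<lambda>a. x + a) t = t - x" if "t \<in> {x..<x + g ! m}" for t
      using that by (intro inv_into_f_eq) auto
    ultimately show ?thesis by (rule bij_betw_cong[THEN iffD1, rotated]) auto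
  qed
  have b2: "bij_betw \<tau>' {x..<x + g ! m} (F m)"
  proof -
    have "bij_betw (h \<circ> (\<lambda>t. t - x)) {x..<x + g ! m} (F m)" by (rule bij_betw_trans[OF sh hb])
    then show ?thesis by (rule bij_betw_cong[THEN iffD1, rotated]) (auto simp: \<tau>'_def)
  qed
  have dj: "(\<Union>u<m. F u) \<inter> F m = {}"
  proof -
    { fix u assume "u < m" then have "F u \<inter> F m = {}" using disj[of u m] ml by simp }
    then show ?thesis by blast
  qed
  have "bij_betw \<tau>' ({..<x} \<union> {x..<x + g ! m}) ((\<Union>u<m. F u) \<union> F m)"
    by (rule bij_betw_combine[OF b1 b2 dj])
  moreover have "{..<x} \<union> {x..<x + g ! m} = {..<bstart g (Suc m)}"
    using bstart_Suc[OF ml] x_def by auto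
  moreover have "(\<Union>u<m. F u) \<union> F m = (\<Union>u<Suc m. F u)" using lessThan_Suc by auto
  moreover have "\<forall>u<Suc m. \<tau>' ` {bstart g u..<bstart g u + g ! u} = F u"
  proof (intro allI impI)
    fix u assume u: "u < Suc m"
    show "\<tau>' ` {bstart g u..<bstart g u + g ! u} = F u"
    proof (cases "u = m")
      case True
      have "\<tau>' ` {x..<x + g ! m} = F m" using b2 by (simp add: bij_betw_def)
      then show ?thesis using True x_def by simp
    next
      case False
      then have um: "u < m" using u by simp
      have "bstart g u + g ! u = bstart g (Suc u)" using bstart_Suc um ml by simp
      also have "\<dots> \<le> x" unfolding x_def bstart_def using um
        by (metis Suc_leI append_take_drop_id le_add1 sum_list_append take_take min_absorb1)
      finally have le: "bstart g u + g ! u \<le> x" .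
      have "\<tau>' ` {bstart g u..<bstart g u + g ! u} = \<tau> ` {bstart g u..<bstart g u + g ! u}"
        using le by (intro image_cong refl) (auto simp: \<tau>'_def)
      then show ?thesis using timg um by simp
    qed
  qed
  ultimately show ?case by (intro exI[of _ \<tau>']) simp
qed


definition Mw :: "nat \<Rightarrow> (nat \<Rightarrow> nat) \<Rightarrow> (nat \<Rightarrow> 'k) \<Rightarrow> complex mat \<Rightarrow> complex mat \<Rightarrow> nat \<Rightarrow> nat \<Rightarrow> real" where
  "Mw d \<beta> \<kappa> X V t j = (\<Sum>k\<in>\<kappa> ` {..<d}. (cmod (\<Sum>a\<in>{a\<in>{..<d}. \<kappa> a = k}. cnj (V $$ (\<beta> a, j)) * X $$ (a,t)))\<^sup>2)"

lemma Mw_nonneg: "Mw d \<beta> \<kappa> X V t j \<ge> 0"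
  unfolding Mw_def by (intro sum_nonneg) auto

lemma Mw_complex: "complex_of_real (Mw d \<beta> \<kappa> X V t j) =
   (\<Sum>a<d. \<Sum>b<d. if \<kappa> a = \<kappa> b then (cnj (V $$ (\<beta> a, j)) * X $$ (a,t)) * cnj (cnj (V $$ (\<beta> b, j)) * X $$ (b,t)) else 0)"
  unfolding Mw_def by (rule group_sq[symmetric]) simp

lemma collapse:
  fixes x y :: "nat \<Rightarrow> complex" and s :: "nat \<Rightarrow> nat \<Rightarrow> complex"
  assumes bl: "\<And>a. a < d \<Longrightarrow> \<beta> a < n"
  shows "(\<Sum>i<n. \<Sum>i'<n. x i * (\<Sum>a<d. \<Sum>b<d. if \<beta> a = i \<and> \<beta> b = i' \<and> \<kappa> a = \<kappa> b then s a b else 0) * y i')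
       = (\<Sum>a<d. \<Sum>b<d. if \<kappa> a = \<kappa> b then x (\<beta> a) * s a b * y (\<beta> b) else 0)"
proof -
  have "(\<Sum>i<n. \<Sum>i'<n. x i * (\<Sum>a<d. \<Sum>b<d. if \<beta> a = i \<and> \<beta> b = i' \<and> \<kappa> a = \<kappa> b then s a b else 0) * y i')
     = (\<Sum>i<n. \<Sum>i'<n. \<Sum>a<d. \<Sum>b<d. if i = \<beta> a then (if i' = \<beta> b then (if \<kappa> a = \<kappa> b then x i * s a b * y i' else 0) else 0) else 0)"
  proof (intro sum.cong refl)
    fix i i'
    have pt: "x i * (if \<beta> a = i \<and> \<beta> b = i' \<and> \<kappa> a = \<kappa> b then s a b else 0) * y i'
        = (if i = \<beta> a then (if i' = \<beta> b then (if \<kappa> a = \<kappa> b then x i * s a b * y i' else 0) else 0) else 0)" for a b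
      by auto
    have "x i * (\<Sum>a<d. \<Sum>b<d. if \<beta> a = i \<and> \<beta> b = i' \<and> \<kappa> a = \<kappa> b then s a b else 0) * y i'
      = (\<Sum>a<d. \<Sum>b<d. x i * (if \<beta> a = i \<and> \<beta> b = i' \<and> \<kappa> a = \<kappa> b then s a b else 0) * y i')"
      by (simp only: sum_distrib_left sum_distrib_right)
    also have "\<dots> = (\<Sum>a<d. \<Sum>b<d. if i = \<beta> a then (if i' = \<beta> b then (if \<kappa> a = \<kappa> b then x i * s a b * y i' else 0) else 0) else 0)"
      by (simp only: pt)
    finally show "x i * (\<Sum>a<d. \<Sum>b<d. if \<beta> a = i \<and> \<beta> b = i' \<and> \<kappa> a = \<kappa> b then s a b else 0) * y i'
      = (\<Sum>a<d. \<Sum>b<d. if i = \<beta> a then (if i' = \<beta> b then (if \<kappa> a = \<kappa> b then x i * s a b * y i' else 0) else 0) else 0)" .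
  qed
  also have "\<dots> = (\<Sum>i<n. \<Sum>a<d. \<Sum>i'<n. \<Sum>b<d. (if i = \<beta> a then (if i' = \<beta> b then (if \<kappa> a = \<kappa> b then x i * s a b * y i' else 0) else 0) else 0))"
    by (rule sum.cong[OF refl], rule sum.swap)
  also have "\<dots> = (\<Sum>a<d. \<Sum>i<n. \<Sum>i'<n. \<Sum>b<d. (if i = \<beta> a then (if i' = \<beta> b then (if \<kappa> a = \<kappa> b then x i * s a b * y i' else 0) else 0) else 0))"
    by (rule sum.swap)
  also have "\<dots> = (\<Sum>a<d. \<Sum>i<n. \<Sum>b<d. \<Sum>i'<n. (if i = \<beta> a then (if i' = \<beta> b then (if \<kappa> a = \<kappa> b then x i * s a b * y i' else 0) else 0) else 0))"
    by (rule sum.cong[OF refl], rule sum.cong[OF refl], rule sum.swap)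
  also have "\<dots> = (\<Sum>a<d. \<Sum>b<d. \<Sum>i<n. \<Sum>i'<n. (if i = \<beta> a then (if i' = \<beta> b then (if \<kappa> a = \<kappa> b then x i * s a b * y i' else 0) else 0) else 0))"
    by (rule sum.cong[OF refl], rule sum.swap)
  also have "\<dots> = (\<Sum>a<d. \<Sum>b<d. if \<kappa> a = \<kappa> b then x (\<beta> a) * s a b * y (\<beta> b) else 0)"
  proof (intro sum.cong refl)
    fix a b assume a: "a \<in> {..<d}" and b: "b \<in> {..<d}"
    define K where "K i i' = (if \<kappa> a = \<kappa> b then x i * s a b * y i' else 0)" for i i'
    have "(\<Sum>i<n. \<Sum>i'<n. if i = \<beta> a then (if i' = \<beta> b then K i i' else 0) else 0)
        = (\<Sum>i<n. if i = \<beta> a then K i (\<beta> b) else 0)"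
      using bl b by (intro sum.cong refl) auto
    also have "\<dots> = K (\<beta> a) (\<beta> b)" using bl a by auto
    finally show "(\<Sum>i<n. \<Sum>i'<n. if i = \<beta> a then (if i' = \<beta> b then (if \<kappa> a = \<kappa> b then x i * s a b * y i' else 0) else 0) else 0)
       = (if \<kappa> a = \<kappa> b then x (\<beta> a) * s a b * y (\<beta> b) else 0)" unfolding K_def .
  qed
  finally show ?thesis .
qed


lemma swap3: "(\<Sum>j\<in>J. \<Sum>a\<in>A. \<Sum>b\<in>B. f j a b) = (\<Sum>a\<in>A. \<Sum>b\<in>B. \<Sum>j\<in>J. f j a b)"
  by (subst sum.swap) (rule sum.cong[OF refl], rule sum.swap)

lemma adjTV_entry: assumes V: "V \<in> carrier_mat n n" and T: "T \<in> carrier_mat n n" and j: "j < n"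
  shows "(adj V * T * V) $$ (j,j) = (\<Sum>i<n. \<Sum>i'<n. cnj (V $$ (i,j)) * T $$ (i,i') * V $$ (i',j))"
proof -
  have aT: "adj V * T \<in> carrier_mat n n" using V T by auto
  have "(adj V * T * V) $$ (j,j) = (\<Sum>i'<n. (adj V * T) $$ (j,i') * V $$ (i',j))"
    using j by (rule mult_entry[OF aT V j])
  also have "\<dots> = (\<Sum>i'<n. (\<Sum>i<n. cnj (V $$ (i,j)) * T $$ (i,i')) * V $$ (i',j))"
    using V T j by (intro sum.cong refl) (subst mult_entry[OF adj_carrier[OF V] T], auto)
  also have "\<dots> = (\<Sum>i'<n. \<Sum>i<n. cnj (V $$ (i,j)) * T $$ (i,i') * V $$ (i',j))"
    by (simp add: sum_distrib_right)
  also have "\<dots> = (\<Sum>i<n. \<Sum>i'<n. cnj (V $$ (i,j)) * T $$ (i,i') * V $$ (i',j))"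
    by (rule sum.swap)
  finally show ?thesis .
qed

lemma adj_conj_dmat: assumes Vu: "unitary_op n V"
  shows "adj V * (V * dmat n h * adj V) * V = dmat n h"
proof -
  have V: "V \<in> carrier_mat n n" using Vu unitary_carrier by blast
  have D: "dmat n h \<in> carrier_mat n n" by simp
  have "adj V * (V * dmat n h * adj V) * V = (adj V * V) * dmat n h * (adj V * V)"
    using V D by (simp add: sq_assoc[of _ n] sq_mult sq_adj)
  also have "\<dots> = dmat n h" using unitary_left[OF Vu] by simp
  finally show ?thesis .
qed

lemma weight_formula:
  assumes Xu: "unitary_op d X" and Vu: "unitary_op n V" and bl: "\<And>a. a < d \<Longrightarrow> \<beta> a < n"
    and teq: "ptr d n \<beta> \<kappa> (X * dmat d (\<lambda>t. complex_of_real (p t)) * adj X) = V * dmat n (\<lambda>j. complex_of_real (r j)) * adj V"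
    and j: "j < n"
  shows "r j = (\<Sum>t<d. p t * Mw d \<beta> \<kappa> X V t j)"
proof -
  have X: "X \<in> carrier_mat d d" using Xu unitary_carrier by blast
  have V: "V \<in> carrier_mat n n" using Vu unitary_carrier by blast
  define \<sigma> where "\<sigma> = X * dmat d (\<lambda>t. complex_of_real (p t)) * adj X"
  define \<tau> where "\<tau> = ptr d n \<beta> \<kappa> \<sigma>"
  have "complex_of_real (r j) = dmat n (\<lambda>j. complex_of_real (r j)) $$ (j,j)" using j by simp
  also have "\<dots> = (adj V * \<tau> * V) $$ (j,j)"
    unfolding \<tau>_def \<sigma>_def teq adj_conj_dmat[OF Vu] ..
  also have "\<dots> = (\<Sum>i<n. \<Sum>i'<n. cnj (V $$ (i,j)) * \<tau> $$ (i,i') * V $$ (i',j))"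
    by (rule adjTV_entry[OF V _ j]) (simp add: \<tau>_def)
  also have "\<dots> = (\<Sum>i<n. \<Sum>i'<n. cnj (V $$ (i,j)) * (\<Sum>a<d. \<Sum>b<d. if \<beta> a = i \<and> \<beta> b = i' \<and> \<kappa> a = \<kappa> b then \<sigma> $$ (a,b) else 0) * V $$ (i',j))"
    unfolding \<tau>_def by (intro sum.cong refl) (simp add: ptr_index)
  also have "\<dots> = (\<Sum>a<d. \<Sum>b<d. if \<kappa> a = \<kappa> b then cnj (V $$ (\<beta> a,j)) * \<sigma> $$ (a,b) * V $$ (\<beta> b,j) else 0)"
    by (rule collapse[OF bl])
  also have "\<dots> = (\<Sum>a<d. \<Sum>b<d. \<Sum>t<d. complex_of_real (p t) * (if \<kappa> a = \<kappa> b then (cnj (V $$ (\<beta> a, j)) * X $$ (a,t)) * cnj (cnj (V $$ (\<beta> b, j)) * X $$ (b,t)) else 0))"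
  proof (intro sum.cong refl)
    fix a b assume a: "a \<in> {..<d}" and b: "b \<in> {..<d}"
    have s: "\<sigma> $$ (a,b) = (\<Sum>t<d. X $$ (a,t) * complex_of_real (p t) * cnj (X $$ (b,t)))"
      unfolding \<sigma>_def using WDW_entry[OF X] a b by simp
    show "(if \<kappa> a = \<kappa> b then cnj (V $$ (\<beta> a,j)) * \<sigma> $$ (a,b) * V $$ (\<beta> b,j) else 0)
      = (\<Sum>t<d. complex_of_real (p t) * (if \<kappa> a = \<kappa> b then (cnj (V $$ (\<beta> a, j)) * X $$ (a,t)) * cnj (cnj (V $$ (\<beta> b, j)) * X $$ (b,t)) else 0))"
      unfolding s by (simp add: sum_distrib_left sum_distrib_right ac_simps)
  qed
  also have "\<dots> = (\<Sum>t<d. complex_of_real (p t) * (\<Sum>a<d. \<Sum>b<d. (if \<kappa> a = \<kappa> b then (cnj (V $$ (\<beta> a, j)) * X $$ (a,t)) * cnj (cnj (V $$ (\<beta> b, j)) * X $$ (b,t)) else 0)))"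
    unfolding sum_distrib_left by (rule swap3[symmetric])
  also have "\<dots> = (\<Sum>t<d. complex_of_real (p t) * complex_of_real (Mw d \<beta> \<kappa> X V t j))"
    by (simp only: Mw_complex)
  also have "\<dots> = complex_of_real (\<Sum>t<d. p t * Mw d \<beta> \<kappa> X V t j)" by simp
  finally show ?thesis by (simp only: of_real_eq_iff)
qed

lemma rowsum:
  assumes Xu: "unitary_op d X" and Vu: "unitary_op n V" and bl: "\<And>a. a < d \<Longrightarrow> \<beta> a < n"
    and inj: "inj_on (\<lambda>a. (\<beta> a, \<kappa> a)) {..<d}" and t: "t < d"
  shows "(\<Sum>j<n. Mw d \<beta> \<kappa> X V t j) = 1"
proof -
  have X: "X \<in> carrier_mat d d" using Xu unitary_carrier by blast
  have V: "V \<in> carrier_mat n n" using Vu unitary_carrier by blast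
  have "complex_of_real (\<Sum>j<n. Mw d \<beta> \<kappa> X V t j) = (\<Sum>j<n. \<Sum>a<d. \<Sum>b<d. if \<kappa> a = \<kappa> b then (cnj (V $$ (\<beta> a, j)) * X $$ (a,t)) * cnj (cnj (V $$ (\<beta> b, j)) * X $$ (b,t)) else 0)"
    by (simp only: of_real_sum Mw_complex)
  also have "\<dots> = (\<Sum>a<d. \<Sum>b<d. \<Sum>j<n. if \<kappa> a = \<kappa> b then (cnj (V $$ (\<beta> a, j)) * X $$ (a,t)) * cnj (cnj (V $$ (\<beta> b, j)) * X $$ (b,t)) else 0)"
    by (rule swap3)
  also have "\<dots> = (\<Sum>a<d. \<Sum>b<d. if b = a then X $$ (a,t) * cnj (X $$ (b,t)) else 0)"
  proof (intro sum.cong refl)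
    fix a b assume a: "a \<in> {..<d}" and b: "b \<in> {..<d}"
    have vv: "(\<Sum>j<n. V $$ (\<beta> b, j) * cnj (V $$ (\<beta> a, j))) = (if \<beta> b = \<beta> a then 1 else 0)"
    proof -
      have "(\<Sum>j<n. V $$ (\<beta> b, j) * cnj (V $$ (\<beta> a, j))) = (V * adj V) $$ (\<beta> b, \<beta> a)"
        using a b bl V by (subst mult_entry[OF V adj_carrier[OF V]]) auto
      also have "\<dots> = (if \<beta> b = \<beta> a then 1 else 0)" using unitary_right[OF Vu] a b bl by simp
      finally show ?thesis .
    qed
    have iff: "(\<kappa> a = \<kappa> b \<and> \<beta> b = \<beta> a) \<longleftrightarrow> b = a"
      using inj a b unfolding inj_on_def by auto
    have "(\<Sum>j<n. if \<kappa> a = \<kappa> b then (cnj (V $$ (\<beta> a, j)) * X $$ (a,t)) * cnj (cnj (V $$ (\<beta> b, j)) * X $$ (b,t)) else 0)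
        = (if \<kappa> a = \<kappa> b then X $$ (a,t) * cnj (X $$ (b,t)) * (\<Sum>j<n. V $$ (\<beta> b, j) * cnj (V $$ (\<beta> a, j))) else 0)"
      by (simp add: sum_distrib_left ac_simps)
    also have "\<dots> = (if b = a then X $$ (a,t) * cnj (X $$ (b,t)) else 0)"
      unfolding vv using iff by auto
    finally show "(\<Sum>j<n. if \<kappa> a = \<kappa> b then (cnj (V $$ (\<beta> a, j)) * X $$ (a,t)) * cnj (cnj (V $$ (\<beta> b, j)) * X $$ (b,t)) else 0)
        = (if b = a then X $$ (a,t) * cnj (X $$ (b,t)) else 0)" .
  qed
  also have "\<dots> = (\<Sum>a<d. X $$ (a,t) * cnj (X $$ (a,t)))" by simp
  also have "\<dots> = (adj X * X) $$ (t,t)"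
    using X t by (subst mult_entry[OF adj_carrier[OF X] X]) (auto simp: ac_simps)
  also have "\<dots> = 1" using unitary_left[OF Xu] t by simp
  finally show ?thesis by (metis of_real_eq_1_iff)
qed

lemma colsum:
  assumes Xu: "unitary_op d X" and bl: "\<And>a. a < d \<Longrightarrow> \<beta> a < n" and j: "j < n"
  shows "(\<Sum>t<d. Mw d \<beta> \<kappa> X V t j) = (\<Sum>a<d. (cmod (V $$ (\<beta> a, j)))\<^sup>2)"
proof -
  have X: "X \<in> carrier_mat d d" using Xu unitary_carrier by blast
  have "complex_of_real (\<Sum>t<d. Mw d \<beta> \<kappa> X V t j) = (\<Sum>t<d. \<Sum>a<d. \<Sum>b<d. if \<kappa> a = \<kappa> b then (cnj (V $$ (\<beta> a, j)) * X $$ (a,t)) * cnj (cnj (V $$ (\<beta> b, j)) * X $$ (b,t)) else 0)"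
    by (simp only: of_real_sum Mw_complex)
  also have "\<dots> = (\<Sum>a<d. \<Sum>b<d. \<Sum>t<d. if \<kappa> a = \<kappa> b then (cnj (V $$ (\<beta> a, j)) * X $$ (a,t)) * cnj (cnj (V $$ (\<beta> b, j)) * X $$ (b,t)) else 0)"
    by (rule swap3)
  also have "\<dots> = (\<Sum>a<d. \<Sum>b<d. if b = a then cnj (V $$ (\<beta> a, j)) * V $$ (\<beta> b, j) else 0)"
  proof (intro sum.cong refl)
    fix a b assume a: "a \<in> {..<d}" and b: "b \<in> {..<d}"
    have xx: "(\<Sum>t<d. X $$ (a,t) * cnj (X $$ (b,t))) = (if a = b then 1 else 0)"
    proof -
      have "(\<Sum>t<d. X $$ (a,t) * cnj (X $$ (b,t))) = (X * adj X) $$ (a,b)"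
        using a b X by (subst mult_entry[OF X adj_carrier[OF X]]) auto
      also have "\<dots> = (if a = b then 1 else 0)" using unitary_right[OF Xu] a b by simp
      finally show ?thesis .
    qed
    have "(\<Sum>t<d. if \<kappa> a = \<kappa> b then (cnj (V $$ (\<beta> a, j)) * X $$ (a,t)) * cnj (cnj (V $$ (\<beta> b, j)) * X $$ (b,t)) else 0)
        = (if \<kappa> a = \<kappa> b then cnj (V $$ (\<beta> a, j)) * V $$ (\<beta> b, j) * (\<Sum>t<d. X $$ (a,t) * cnj (X $$ (b,t))) else 0)"
      by (simp add: sum_distrib_left ac_simps)
    also have "\<dots> = (if b = a then cnj (V $$ (\<beta> a, j)) * V $$ (\<beta> b, j) else 0)"
      unfolding xx by auto
    finally show "(\<Sum>t<d. if \<kappa> a = \<kappa> b then (cnj (V $$ (\<beta> a, j)) * X $$ (a,t)) * cnj (cnj (V $$ (\<beta> b, j)) * X $$ (b,t)) else 0)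
        = (if b = a then cnj (V $$ (\<beta> a, j)) * V $$ (\<beta> b, j) else 0)" .
  qed
  also have "\<dots> = (\<Sum>a<d. cnj (V $$ (\<beta> a, j)) * V $$ (\<beta> a, j))" by simp
  also have "\<dots> = (\<Sum>a<d. complex_of_real ((cmod (V $$ (\<beta> a, j)))\<^sup>2))"
    by (intro sum.cong refl) (metis complex_norm_square mult.commute)
  also have "\<dots> = complex_of_real (\<Sum>a<d. (cmod (V $$ (\<beta> a, j)))\<^sup>2)" by (simp only: of_real_sum)
  finally show ?thesis by (simp only: of_real_eq_iff)
qed


lemma psd_nonneg:
  assumes Wu: "unitary_op n W" and Aeq: "A = W * dmat n (\<lambda>i. complex_of_real (q i)) * adj W"
    and psd: "\<forall>v \<in> carrier_vec n. 0 \<le> Re (conjugate v \<bullet> (A *\<^sub>v v))" and i: "i < n"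
  shows "q i \<ge> 0"
proof -
  have W: "W \<in> carrier_mat n n" using Wu unitary_carrier by blast
  define D where "D = dmat n (\<lambda>i. complex_of_real (q i))"
  have D: "D \<in> carrier_mat n n" by (simp add: D_def)
  define v where "v = col W i"
  have v: "v \<in> carrier_vec n" using W by (simp add: v_def carrier_vecI)
  have AW: "A * W = W * D"
  proof -
    have "A * W = W * D * (adj W * W)" unfolding Aeq D_def using W
      by (simp add: sq_assoc[of _ n] sq_mult sq_adj)
    also have "\<dots> = W * D" using unitary_left[OF Wu] W D by simp
    finally show ?thesis .
  qed
  have Av: "A *\<^sub>v v = complex_of_real (q i) \<cdot>\<^sub>v v"
  proof (rule eq_vecI)
    show "dim_vec (A *\<^sub>v v) = dim_vec (complex_of_real (q i) \<cdot>\<^sub>v v)" using v Aeq W by simp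
    fix k assume "k < dim_vec (complex_of_real (q i) \<cdot>\<^sub>v v)"
    then have k: "k < n" using v by simp
    have "(A *\<^sub>v v) $ k = (A * W) $$ (k,i)" using k i W Aeq by (simp add: v_def)
    also have "\<dots> = (W * D) $$ (k,i)" by (simp add: AW)
    also have "\<dots> = (\<Sum>l<n. W $$ (k,l) * D $$ (l,i))" by (rule mult_entry[OF W D k i])
    also have "\<dots> = W $$ (k,i) * complex_of_real (q i)"
      using i by (simp add: D_def if_distrib cong: if_cong)
    finally show "(A *\<^sub>v v) $ k = (complex_of_real (q i) \<cdot>\<^sub>v v) $ k" using k i W by (simp add: v_def)
  qed
  have vv: "conjugate v \<bullet> v = 1"
  proof -
    have "conjugate v \<bullet> v = (\<Sum>k<n. cnj (W $$ (k,i)) * W $$ (k,i))"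
      using v W i by (simp add: scalar_prod_def v_def atLeast0LessThan)
    also have "\<dots> = (adj W * W) $$ (i,i)"
      using W i by (subst mult_entry[OF adj_carrier[OF W] W]) auto
    also have "\<dots> = 1" using unitary_left[OF Wu] i by simp
    finally show ?thesis .
  qed
  have "conjugate v \<bullet> (A *\<^sub>v v) = complex_of_real (q i)"
    unfolding Av using v by (simp add: vv)
  then show ?thesis using psd v by force
qed

lemma unitary_row_norm: assumes Vu: "unitary_op n V" and i: "i < n"
  shows "(\<Sum>j<n. (cmod (V $$ (i,j)))\<^sup>2) = 1"
proof -
  have V: "V \<in> carrier_mat n n" using Vu unitary_carrier by blast
  have "complex_of_real (\<Sum>j<n. (cmod (V $$ (i,j)))\<^sup>2) = (\<Sum>j<n. V $$ (i,j) * cnj (V $$ (i,j)))"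
    by (simp only: of_real_sum complex_norm_square)
  also have "\<dots> = (V * adj V) $$ (i,i)" using V i by (subst mult_entry[OF V adj_carrier[OF V]]) auto
  also have "\<dots> = 1" using unitary_right[OF Vu] i by simp
  finally show ?thesis by (metis of_real_eq_1_iff)
qed

lemma unitary_col_norm: assumes Vu: "unitary_op n V" and j: "j < n"
  shows "(\<Sum>i<n. (cmod (V $$ (i,j)))\<^sup>2) = 1"
proof -
  have V: "V \<in> carrier_mat n n" using Vu unitary_carrier by blast
  have "complex_of_real (\<Sum>i<n. (cmod (V $$ (i,j)))\<^sup>2) = (\<Sum>i<n. cnj (V $$ (i,j)) * V $$ (i,j))"
    by (simp only: of_real_sum complex_norm_square mult.commute)
  also have "\<dots> = (adj V * V) $$ (j,j)" using V j by (subst mult_entry[OF adj_carrier[OF V] V]) auto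
  also have "\<dots> = 1" using unitary_left[OF Vu] j by simp
  finally show ?thesis by (metis of_real_eq_1_iff)
qed

lemma group_beta:
  fixes h :: "nat \<Rightarrow> real" and \<beta> :: "nat \<Rightarrow> nat" and d n :: nat
  assumes bl: "\<And>a. a < d \<Longrightarrow> \<beta> a < n"
  shows "(\<Sum>a<d. h (\<beta> a)) = (\<Sum>i<n. real (card {a. a < d \<and> \<beta> a = i}) * h i)"
proof -
  have "(\<Sum>i<n. real (card {a. a < d \<and> \<beta> a = i}) * h i) = (\<Sum>i<n. \<Sum>a\<in>{a. a < d \<and> \<beta> a = i}. h i)"
    by simp
  also have "\<dots> = (\<Sum>i<n. \<Sum>a<d. if \<beta> a = i then h i else 0)"
    by (rule sum.cong[OF refl], rule sum.mono_neutral_cong_left) auto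
  also have "\<dots> = (\<Sum>a<d. \<Sum>i<n. if \<beta> a = i then h i else 0)" by (rule sum.swap)
  also have "\<dots> = (\<Sum>a<d. h (\<beta> a))" using bl by (intro sum.cong refl) (simp add: sum.delta)
  finally show ?thesis by simp
qed

lemma bstart_sum: "m \<le> length g \<Longrightarrow> bstart g m = (\<Sum>u<m. g ! u)"
  by (induction m) (auto simp: bstart_def bstart_Suc take_Suc_conv_app_nth)

lemma ptr_herm: assumes s: "\<sigma> \<in> carrier_mat d d" and h: "adj \<sigma> = \<sigma>"
  shows "adj (ptr d n \<beta> \<kappa> \<sigma>) = ptr d n \<beta> \<kappa> \<sigma>"
proof (rule eq_matI)
  fix i j assume "i < dim_row (ptr d n \<beta> \<kappa> \<sigma>)" "j < dim_col (ptr d n \<beta> \<kappa> \<sigma>)"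
  then have ij: "i < n" "j < n" by (auto simp: ptr_def)
  have hs: "cnj (\<sigma> $$ (a,b)) = \<sigma> $$ (b,a)" if "a < d" "b < d" for a b
    by (metis h s that adj_index carrier_matD(1) carrier_matD(2))
  have "adj (ptr d n \<beta> \<kappa> \<sigma>) $$ (i,j) = cnj (ptr d n \<beta> \<kappa> \<sigma> $$ (j,i))" using ij by (simp add: ptr_def)
  also have "\<dots> = (\<Sum>a<d. \<Sum>b<d. if \<beta> a = j \<and> \<beta> b = i \<and> \<kappa> a = \<kappa> b then \<sigma> $$ (b,a) else 0)"
    using ij hs by (simp add: ptr_index cnj_sum if_distrib cong: if_cong)
  also have "\<dots> = (\<Sum>b<d. \<Sum>a<d. if \<beta> a = j \<and> \<beta> b = i \<and> \<kappa> a = \<kappa> b then \<sigma> $$ (b,a) else 0)"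
    by (rule sum.swap)
  also have "\<dots> = ptr d n \<beta> \<kappa> \<sigma> $$ (i,j)" using ij
    by (simp add: ptr_index) (intro sum.cong refl, metis)
  finally show "adj (ptr d n \<beta> \<kappa> \<sigma>) $$ (i,j) = ptr d n \<beta> \<kappa> \<sigma> $$ (i,j)" .
qed (auto simp: ptr_def)

lemma adj_dmat_real: "adj (dmat n (\<lambda>i. complex_of_real (q i))) = dmat n (\<lambda>i. complex_of_real (q i))"
  by (rule eq_matI) auto

lemma WDW_herm: assumes W: "W \<in> carrier_mat n n"
  shows "adj (W * dmat n (\<lambda>i. complex_of_real (q i)) * adj W) = W * dmat n (\<lambda>i. complex_of_real (q i)) * adj W"
proof -
  have D: "dmat n (\<lambda>i. complex_of_real (q i)) \<in> carrier_mat n n" by simp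
  have WD: "W * dmat n (\<lambda>i. complex_of_real (q i)) \<in> carrier_mat n n" using W by simp
  have "adj (W * dmat n (\<lambda>i. complex_of_real (q i)) * adj W) = adj (adj W) * adj (W * dmat n (\<lambda>i. complex_of_real (q i)))"
    by (rule adj_mult[OF WD adj_carrier[OF W]])
  also have "\<dots> = W * (dmat n (\<lambda>i. complex_of_real (q i)) * adj W)"
    by (simp add: adj_mult[OF W D] adj_dmat_real)
  also have "\<dots> = W * dmat n (\<lambda>i. complex_of_real (q i)) * adj W"
    by (rule assoc_mult_mat[symmetric, OF W D adj_carrier[OF W]])
  finally show ?thesis .
qed


definition Qv :: "nat list \<Rightarrow> real list \<Rightarrow> nat \<Rightarrow> real" where
  "Qv g p u = (\<Sum>a<g ! u. p ! (bstart g u + a))"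

locale core =
  fixes d n :: nat and \<beta> :: "nat \<Rightarrow> nat" and \<kappa> :: "nat \<Rightarrow> 'k" and g :: "nat list" and f :: "nat \<Rightarrow> nat"
    and \<rho> :: "complex mat" and p :: "real list"
  assumes bl: "\<And>a. a < d \<Longrightarrow> \<beta> a < n"
    and inj: "inj_on (\<lambda>a. (\<beta> a, \<kappa> a)) {..<d}"
    and glen: "length g = n" and gsorted: "sorted_wrt (\<ge>) g" and gsum: "sum_list g = d"
    and fbij: "bij_betw f {..<n} {..<n}"
    and gcard: "\<And>i. i < n \<Longrightarrow> card {a. a < d \<and> \<beta> a = i} = g ! (f i)"
    and dens: "density_op d \<rho>"
    and spec: "mset (map complex_of_real p) = proots (char_poly \<rho>)"
    and psorted: "sorted_wrt (\<ge>) p"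
begin

lemma rho_carrier: "\<rho> \<in> carrier_mat d d" using dens by (simp add: density_op_def)
lemma rho_herm: "adj \<rho> = \<rho>" using dens by (simp add: density_op_def)

lemma rho_spec: "length p = d \<and> (\<exists>W. unitary_op d W \<and> \<rho> = W * dmat d (\<lambda>i. complex_of_real (p ! i)) * adj W)"
  by (rule spectral_ordered[OF rho_carrier rho_herm spec])

lemma plen: "length p = d" using rho_spec by simp

lemma pnn: "i < d \<Longrightarrow> p ! i \<ge> 0"
  using rho_spec psd_nonneg[of d _ \<rho> "\<lambda>i. p ! i" i] dens by (auto simp: density_op_def)

lemma pdesc: "i \<le> j \<Longrightarrow> j < d \<Longrightarrow> p ! j \<le> p ! i"
  using sorted_wrt_nth_less[OF psorted, of i j] plen by (cases "i = j") auto

lemma gdesc: "i \<le> j \<Longrightarrow> j < n \<Longrightarrow> g ! j \<le> g ! i"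
  using sorted_wrt_nth_less[OF gsorted, of i j] glen by (cases "i = j") auto

lemma bstart_n: "bstart g n = d" using bstart_len[of g] glen gsum by simp

lemma blk_lt: "u < n \<Longrightarrow> a < g ! u \<Longrightarrow> bstart g u + a < d"
  using bstart_Suc[of u g] bstart_le[of g "Suc u"] glen gsum by simp

lemma Qv_nn: "u < n \<Longrightarrow> Qv g p u \<ge> 0"
  unfolding Qv_def using blk_lt pnn by (intro sum_nonneg) auto

lemma Qv_blocks: "m \<le> n \<Longrightarrow> (\<Sum>t<bstart g m. p ! t) = (\<Sum>u<m. Qv g p u)"
  unfolding Qv_def using sum_blocks[of m g "\<lambda>t. p ! t"] glen by simp

lemma lower:
  assumes b: "bs > 1" and Uu: "unitary_op d U"
  shows "- (\<Sum>u<n. Qv g p u * log bs (Qv g p u)) \<le> vN_entropy bs (ptr d n \<beta> \<kappa> (U * \<rho> * adj U))"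
proof -
  obtain W where Wu: "unitary_op d W" and \<rho>eq: "\<rho> = W * dmat d (\<lambda>i. complex_of_real (p ! i)) * adj W"
    using rho_spec by blast
  have Wc: "W \<in> carrier_mat d d" using Wu unitary_carrier by blast
  have Uc: "U \<in> carrier_mat d d" using Uu unitary_carrier by blast
  define X where "X = U * W"
  have Xu: "unitary_op d X" unfolding X_def by (rule unitary_mult[OF Uu Wu])
  have Xc: "X \<in> carrier_mat d d" using Xu unitary_carrier by blast
  define D where "D = dmat d (\<lambda>i. complex_of_real (p ! i))"
  have Dc: "D \<in> carrier_mat d d" by (simp add: D_def)
  have \<sigma>eq: "U * \<rho> * adj U = X * D * adj X"
    unfolding X_def \<rho>eq D_def[symmetric] using Uc Wc Dc
    by (simp add: adj_mult[OF Uc Wc] sq_assoc[of _ d] sq_mult sq_adj)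
  define \<tau> where "\<tau> = ptr d n \<beta> \<kappa> (X * D * adj X)"
  have \<tau>c: "\<tau> \<in> carrier_mat n n" by (simp add: \<tau>_def)
  have h\<tau>: "adj \<tau> = \<tau>" unfolding \<tau>_def D_def
    by (rule ptr_herm[OF WDW_carrier[OF Xc] WDW_herm[OF Xc]])
  obtain V0 r0 where V0u: "unitary_op n V0" and \<tau>eq0: "\<tau> = V0 * dmat n (\<lambda>i. complex_of_real (r0 i)) * adj V0"
    using spectral[OF \<tau>c h\<tau>] by blast
  define rs where "rs = rev (sort (map r0 [0..<n]))"
  have "mset (map complex_of_real rs) = mset (map (\<lambda>i. complex_of_real (r0 i)) [0..<n])"
  proof -
    have "mset rs = mset (map r0 [0..<n])" by (simp add: rs_def)
    then have "image_mset complex_of_real (mset rs) = image_mset complex_of_real (mset (map r0 [0..<n]))" by simp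
    then show ?thesis by (simp add: multiset.map_comp comp_def)
  qed
  also have "\<dots> = proots (char_poly \<tau>)" using proots_WDW[OF V0u] \<tau>eq0 by simp
  finally have sp\<tau>: "mset (map complex_of_real rs) = proots (char_poly \<tau>)" .
  obtain V where Vu: "unitary_op n V" and \<tau>eq: "\<tau> = V * dmat n (\<lambda>i. complex_of_real (rs ! i)) * adj V"
    and lrs: "length rs = n"
    using spectral_ordered[OF \<tau>c h\<tau> sp\<tau>] by blast
  have rsorted: "sorted_wrt (\<ge>) rs"
    unfolding rs_def sorted_wrt_rev using sorted_sort[of "map r0 [0..<n]"] by simp
  define r where "r j = rs ! j" for j
  have S: "vN_entropy bs (ptr d n \<beta> \<kappa> (U * \<rho> * adj U)) = - (\<Sum>j<n. r j * log bs (r j))"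
    unfolding \<sigma>eq \<tau>_def[symmetric] r_def using entropy_WDW[OF Vu, of bs "\<lambda>i. rs ! i"] \<tau>eq by simp
  have \<tau>': "ptr d n \<beta> \<kappa> (X * dmat d (\<lambda>t. complex_of_real (p ! t)) * adj X) = V * dmat n (\<lambda>j. complex_of_real (rs ! j)) * adj V"
    using \<tau>eq unfolding \<tau>_def D_def .
  have wf: "r j = (\<Sum>t<d. p ! t * Mw d \<beta> \<kappa> X V t j)" if j: "j < n" for j
    unfolding r_def by (rule weight_formula[OF Xu Vu bl \<tau>' j])
  have rnn: "r j \<ge> 0" if "j < n" for j
    unfolding wf[OF that] using pnn Mw_nonneg by (intro sum_nonneg mult_nonneg_nonneg) auto
  have rdesc: "r j \<le> r i" if "i \<le> j" "j < n" for i j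
    using sorted_wrt_nth_less[OF rsorted, of i j] lrs that unfolding r_def by (cases "i = j") auto
  define finv where "finv = inv_into {..<n} f"
  have finv: "finv u < n \<and> f (finv u) = u" if "u < n" for u
    using fbij that unfolding finv_def bij_betw_def
    by (metis f_inv_into_f inv_into_into lessThan_iff)
  have finvf: "finv (f i) = i" if "i < n" for i
    using fbij that unfolding finv_def bij_betw_def by (simp add: inv_into_f_f)
  have major: "(\<Sum>j<m. r j) \<le> (\<Sum>u<m. Qv g p u)" if m: "m \<le> n" for m
  proof -
    define w where "w t = (\<Sum>j<m. Mw d \<beta> \<kappa> X V t j)" for t
    have e1: "(\<Sum>j<m. r j) = (\<Sum>t<d. p ! t * w t)"
    proof -
      have "(\<Sum>j<m. r j) = (\<Sum>j<m. \<Sum>t<d. p ! t * Mw d \<beta> \<kappa> X V t j)"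
        using m wf by (intro sum.cong refl) auto
      also have "\<dots> = (\<Sum>t<d. \<Sum>j<m. p ! t * Mw d \<beta> \<kappa> X V t j)" by (rule sum.swap)
      also have "\<dots> = (\<Sum>t<d. p ! t * w t)" by (simp add: w_def sum_distrib_left)
      finally show ?thesis .
    qed
    have w01: "0 \<le> w t \<and> w t \<le> 1" if t: "t < d" for t
    proof
      show "0 \<le> w t" unfolding w_def using Mw_nonneg by (intro sum_nonneg) auto
      have "w t \<le> (\<Sum>j<n. Mw d \<beta> \<kappa> X V t j)" unfolding w_def
        using m Mw_nonneg by (intro sum_mono2) auto
      also have "\<dots> = 1" by (rule rowsum[OF Xu Vu bl inj t])
      finally show "w t \<le> 1" .
    qed
    define s where "s i = (\<Sum>j<m. (cmod (V $$ (i,j)))\<^sup>2)" for i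
    have s01: "0 \<le> s i \<and> s i \<le> 1" if i: "i < n" for i
    proof
      show "0 \<le> s i" unfolding s_def by (intro sum_nonneg) auto
      have "s i \<le> (\<Sum>j<n. (cmod (V $$ (i,j)))\<^sup>2)" unfolding s_def using m by (intro sum_mono2) auto
      also have "\<dots> = 1" by (rule unitary_row_norm[OF Vu i])
      finally show "s i \<le> 1" .
    qed
    have ssum: "(\<Sum>i<n. s i) = real m"
    proof -
      have "(\<Sum>i<n. s i) = (\<Sum>j<m. \<Sum>i<n. (cmod (V $$ (i,j)))\<^sup>2)" unfolding s_def by (rule sum.swap)
      also have "\<dots> = (\<Sum>j<m. 1)" using m by (intro sum.cong refl unitary_col_norm[OF Vu]) auto
      finally show ?thesis by simp
    qed
    have e2: "(\<Sum>t<d. w t) = (\<Sum>i<n. real (g ! (f i)) * s i)"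
    proof -
      have "(\<Sum>t<d. w t) = (\<Sum>j<m. \<Sum>t<d. Mw d \<beta> \<kappa> X V t j)" unfolding w_def by (rule sum.swap)
      also have "\<dots> = (\<Sum>j<m. \<Sum>a<d. (cmod (V $$ (\<beta> a, j)))\<^sup>2)"
        using m by (intro sum.cong refl colsum[OF Xu bl]) auto
      also have "\<dots> = (\<Sum>a<d. s (\<beta> a))" unfolding s_def by (rule sum.swap)
      also have "\<dots> = (\<Sum>i<n. real (card {a. a < d \<and> \<beta> a = i}) * s i)" by (rule group_beta[OF bl])
      also have "\<dots> = (\<Sum>i<n. real (g ! (f i)) * s i)" using gcard by (intro sum.cong refl) auto
      finally show ?thesis .
    qed
    have e3: "(\<Sum>i<n. real (g ! (f i)) * s i) = (\<Sum>u<n. real (g ! u) * s (finv u))"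
    proof -
      have "(\<Sum>i<n. real (g ! (f i)) * s i) = (\<Sum>i<n. (\<lambda>u. real (g ! u) * s (finv u)) (f i))"
        using finvf by (intro sum.cong refl) auto
      also have "\<dots> = (\<Sum>u<n. real (g ! u) * s (finv u))" by (rule sum.reindex_bij_betw[OF fbij])
      finally show ?thesis .
    qed
    have ssum': "(\<Sum>u<n. s (finv u)) = real m"
    proof -
      have "(\<Sum>i<n. s i) = (\<Sum>i<n. (\<lambda>u. s (finv u)) (f i))" using finvf by (intro sum.cong refl) auto
      also have "\<dots> = (\<Sum>u<n. s (finv u))" by (rule sum.reindex_bij_betw[OF fbij])
      finally show ?thesis using ssum by simp
    qed
    have "(\<Sum>u<n. real (g ! u) * s (finv u)) \<le> (\<Sum>u<m. real (g ! u))"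
      by (rule knapsack) (use gdesc s01 finv ssum' m in auto)
    also have "\<dots> = real (bstart g m)" using bstart_sum[of m g] glen m by simp
    finally have wsum: "(\<Sum>t<d. w t) \<le> real (bstart g m)" using e2 e3 by simp
    have "(\<Sum>t<d. p ! t * w t) \<le> (\<Sum>t<bstart g m. p ! t)"
      by (rule knapsack) (use pdesc pnn w01 wsum bstart_le[of g m] gsum in auto)
    also have "\<dots> = (\<Sum>u<m. Qv g p u)" by (rule Qv_blocks[OF m])
    finally show ?thesis using e1 by simp
  qed
  have tot: "(\<Sum>j<n. r j) = (\<Sum>u<n. Qv g p u)"
  proof -
    have "(\<Sum>j<n. r j) = (\<Sum>j<n. \<Sum>t<d. p ! t * Mw d \<beta> \<kappa> X V t j)" using wf by (intro sum.cong refl) auto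
    also have "\<dots> = (\<Sum>t<d. p ! t * (\<Sum>j<n. Mw d \<beta> \<kappa> X V t j))" by (simp add: sum.swap[of _ "{..<n}"] sum_distrib_left)
    also have "\<dots> = (\<Sum>t<d. p ! t)" using rowsum[OF Xu Vu bl inj] by simp
    also have "\<dots> = (\<Sum>u<n. Qv g p u)" using Qv_blocks[of n] bstart_n by simp
    finally show ?thesis .
  qed
  have "(\<Sum>j<n. r j * log bs (r j)) \<le> (\<Sum>u<n. Qv g p u * log bs (Qv g p u))"
    by (rule karamata[OF b]) (use rnn Qv_nn rdesc major tot in auto)
  then show ?thesis using S by simp
qed

end


lemma adj_one: "adj (1\<^sub>m n) = 1\<^sub>m n" by (rule eq_matI) auto

context core
begin

lemma exist:
  shows "\<exists>U. unitary_op d U \<and> vN_entropy bs (ptr d n \<beta> \<kappa> (U * \<rho> * adj U)) = - (\<Sum>u<n. Qv g p u * log bs (Qv g p u))"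
proof -
  obtain W where Wu: "unitary_op d W" and \<rho>eq: "\<rho> = W * dmat d (\<lambda>i. complex_of_real (p ! i)) * adj W"
    using rho_spec by blast
  have Wc: "W \<in> carrier_mat d d" using Wu unitary_carrier by blast
  define F where "F u = {a. a < d \<and> f (\<beta> a) = u}" for u
  define finv where "finv = inv_into {..<n} f"
  have finv: "finv u < n \<and> f (finv u) = u" if "u < n" for u
    using fbij that unfolding finv_def bij_betw_def
    by (metis f_inv_into_f inv_into_into lessThan_iff)
  have finj: "inj_on f {..<n}" using fbij by (simp add: bij_betw_def)
  have Ffib: "F (f i) = {a. a < d \<and> \<beta> a = i}" if i: "i < n" for i
    unfolding F_def using finj bl i by (auto simp: inj_on_def)
  have Fcard: "finite (F u) \<and> card (F u) = g ! u" if u: "u < length g" for u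
  proof -
    have un: "u < n" using u glen by simp
    have "F u = F (f (finv u))" using finv[OF un] by simp
    also have "\<dots> = {a. a < d \<and> \<beta> a = finv u}" using Ffib finv[OF un] by blast
    finally have "card (F u) = g ! (f (finv u))" using gcard finv[OF un] by simp
    then show ?thesis using finv[OF un] by (simp add: F_def)
  qed
  have disj: "F u \<inter> F v = {}" if "u \<noteq> v" for u v using that by (auto simp: F_def)
  obtain \<tau>0 where \<tau>b0: "bij_betw \<tau>0 {..<bstart g (length g)} (\<Union>u<length g. F u)"
    and \<tau>img: "\<forall>u<length g. \<tau>0 ` {bstart g u..<bstart g u + g ! u} = F u"
    using block_bij[of g F "length g"] Fcard disj by blast
  have UF: "(\<Union>u<n. F u) = {..<d}"
  proof
    show "(\<Union>u<n. F u) \<subseteq> {..<d}" by (auto simp: F_def)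
    show "{..<d} \<subseteq> (\<Union>u<n. F u)"
    proof
      fix a assume a: "a \<in> {..<d}"
      then have "f (\<beta> a) < n" using fbij bl unfolding bij_betw_def by auto
      then show "a \<in> (\<Union>u<n. F u)" using a by (auto simp: F_def)
    qed
  qed
  have \<tau>b: "bij_betw \<tau>0 {..<d} {..<d}" using \<tau>b0 glen bstart_n UF by simp
  define e where "e a = p ! (inv_into {..<d} \<tau>0 a)" for a
  have e\<tau>: "e (\<tau>0 t) = p ! t" if "t < d" for t
    using \<tau>b that unfolding e_def bij_betw_def by (simp add: inv_into_f_f)
  define P where "P = pmat d \<tau>0"
  have Pu: "unitary_op d P" unfolding P_def by (rule pmat_unitary[OF \<tau>b])
  have Pc: "P \<in> carrier_mat d d" using Pu unitary_carrier by blast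
  define U where "U = P * adj W"
  have Uu: "unitary_op d U" unfolding U_def by (rule unitary_mult[OF Pu unitary_adj[OF Wu]])
  define D where "D = dmat d (\<lambda>i. complex_of_real (p ! i))"
  have Dc: "D \<in> carrier_mat d d" by (simp add: D_def)
  have "U * \<rho> * adj U = P * (adj W * W) * D * (adj W * W) * adj P"
    unfolding U_def \<rho>eq D_def[symmetric] using Pc Wc Dc
    by (simp add: adj_mult[OF Pc adj_carrier[OF Wc]] sq_assoc[of _ d] sq_mult sq_adj)
  also have "\<dots> = P * D * adj P" using unitary_left[OF Wu] Pc Dc by simp
  also have "D = dmat d (\<lambda>t. (\<lambda>a. complex_of_real (e a)) (\<tau>0 t))"
    unfolding D_def by (rule eq_matI) (auto simp: e\<tau>)
  also have "P * \<dots> * adj P = dmat d (\<lambda>a. complex_of_real (e a))"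
    unfolding P_def by (rule pmat_conj[OF \<tau>b])
  finally have UrU: "U * \<rho> * adj U = dmat d (\<lambda>a. complex_of_real (e a))" .
  define y where "y i = (\<Sum>a\<in>{a. a < d \<and> \<beta> a = i}. e a)" for i
  have "ptr d n \<beta> \<kappa> (U * \<rho> * adj U) = dmat n (\<lambda>i. complex_of_real (y i))"
    unfolding UrU ptr_dmat y_def by (simp only: of_real_sum)
  also have "\<dots> = 1\<^sub>m n * dmat n (\<lambda>i. complex_of_real (y i)) * adj (1\<^sub>m n)"
    by (simp add: adj_one)
  finally have "vN_entropy bs (ptr d n \<beta> \<kappa> (U * \<rho> * adj U)) = - (\<Sum>i<n. y i * log bs (y i))"
    using entropy_WDW[OF unitary_one[of n], where \<beta>=bs and r=y] by simp
  also have "(\<Sum>i<n. y i * log bs (y i)) = (\<Sum>i<n. (\<lambda>u. Qv g p u * log bs (Qv g p u)) (f i))"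
  proof (intro sum.cong refl)
    fix i assume i: "i \<in> {..<n}"
    then have fi: "f i < n" using fbij unfolding bij_betw_def by auto
    define B where "B = {bstart g (f i)..<bstart g (f i) + g ! (f i)}"
    have "bstart g (f i) + g ! (f i) \<le> d"
      using bstart_Suc[of "f i" g] bstart_le[of g "Suc (f i)"] glen gsum fi by simp
    then have Bd: "B \<subseteq> {..<d}" by (auto simp: B_def)
    have "{a. a < d \<and> \<beta> a = i} = \<tau>0 ` B" using Ffib i \<tau>img fi glen unfolding B_def by auto
    then have "y i = (\<Sum>a\<in>\<tau>0 ` B. e a)" by (simp add: y_def)
    also have "\<dots> = (\<Sum>t\<in>B. e (\<tau>0 t))"
    proof -
      have "inj_on \<tau>0 B" using \<tau>b Bd unfolding bij_betw_def by (auto intro: inj_on_subset)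
      then show ?thesis by (simp add: sum.reindex)
    qed
    also have "\<dots> = (\<Sum>t\<in>B. p ! t)" using Bd e\<tau> by (intro sum.cong refl) auto
    also have "\<dots> = Qv g p (f i)" unfolding B_def Qv_def by (rule sum_ivl_shift)
    finally show "y i * log bs (y i) = (\<lambda>u. Qv g p u * log bs (Qv g p u)) (f i)" by simp
  qed
  also have "\<dots> = (\<Sum>u<n. Qv g p u * log bs (Qv g p u))" by (rule sum.reindex_bij_betw[OF fbij])
  finally show ?thesis using Uu by blast
qed

end


lemma comps_mem: "xs \<in> set (comps n l) \<longleftrightarrow> length xs = l \<and> sum_list xs = n"
proof (induction l arbitrary: n xs)
  case 0 then show ?case by auto
next
  case (Suc l)
  show ?case
  proof
    assume "xs \<in> set (comps n (Suc l))"
    then obtain k ys where "k \<le> n" "ys \<in> set (comps (n - k) l)" "xs = k # ys" by auto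
    then show "length xs = Suc l \<and> sum_list xs = n" using Suc.IH by auto
  next
    assume a: "length xs = Suc l \<and> sum_list xs = n"
    then obtain k ys where xs: "xs = k # ys" by (cases xs) auto
    then have "k \<le> n" "ys \<in> set (comps (n - k) l)" using a Suc.IH by auto
    then show "xs \<in> set (comps n (Suc l))" using xs by force
  qed
qed

lemma distinct_concat_upt:
  assumes "\<And>k. k < m \<Longrightarrow> distinct (F k)"
    and "\<And>k j x. k < j \<Longrightarrow> j < m \<Longrightarrow> x \<in> set (F k) \<Longrightarrow> x \<notin> set (F j)"
  shows "distinct (concat (map F [0..<m]))"
  using assms
proof (induction m)
  case 0 then show ?case by simp
next
  case (Suc m)
  have "distinct (concat (map F [0..<m]))" using Suc by auto
  moreover have "distinct (F m)" using Suc by auto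
  moreover have "set (concat (map F [0..<m])) \<inter> set (F m) = {}" using Suc.prems(2)[of _ m] by auto
  ultimately show ?case by simp
qed

lemma comps_distinct: "distinct (comps n l)"
proof (induction l arbitrary: n)
  case 0 then show ?case by simp
next
  case (Suc l)
  show ?case unfolding comps.simps
    by (rule distinct_concat_upt) (auto simp: distinct_map Suc.IH)
qed

lemma comps_length: "0 < l \<Longrightarrow> length (comps n l) = (n + l - 1) choose (l - 1)"
proof (induction l arbitrary: n)
  case 0 then show ?case by simp
next
  case (Suc l)
  show ?case
  proof (cases "l = 0")
    case True
    have "set (comps n (Suc 0)) = {[n]}"
    proof
      show "set (comps n (Suc 0)) \<subseteq> {[n]}"
      proof
        fix xs assume "xs \<in> set (comps n (Suc 0))"
        then have "length xs = 1" "sum_list xs = n" using comps_mem by auto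
        then show "xs \<in> {[n]}" by (cases xs) auto
      qed
      show "{[n]} \<subseteq> set (comps n (Suc 0))" using comps_mem[of "[n]" n "Suc 0"] by simp
    qed
    then have "length (comps n (Suc 0)) = 1" using distinct_card[OF comps_distinct[of n "Suc 0"]] by simp
    then show ?thesis using True by simp
  next
    case False
    have "length (comps n (Suc l)) = (\<Sum>k\<leftarrow>[0..<Suc n]. length (comps (n - k) l))"
      by (simp add: length_concat comp_def)
    also have "\<dots> = (\<Sum>k\<in>{0..n}. length (comps (n - k) l))"
      by (simp only: sum_set_upt_conv_sum_list_nat[symmetric] set_upt atLeastLessThanSuc_atLeastAtMost)
    also have "\<dots> = (\<Sum>k\<in>{0..n}. (n - k + l - 1) choose (l - 1))"
      by (rule sum.cong[OF refl], rule Suc.IH) (use False in simp)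
    also have "\<dots> = (\<Sum>k\<in>{0..n}. (l - 1 + k) choose (l - 1))"
      by (subst sum.atLeastAtMost_rev) (intro sum.cong refl, use False in \<open>auto simp: add.commute\<close>)
    also have "\<dots> = (l - 1 + n + 1) choose (l - 1 + 1)"
      using choose_rising_sum(1)[of "l - 1" n] by (simp add: atLeast0AtMost)
    finally show ?thesis using False by (simp add: add.commute)
  qed
qed


definition Gl :: "(nat \<Rightarrow> nat) \<Rightarrow> (nat \<Rightarrow> nat) \<Rightarrow> nat \<Rightarrow> nat list" where
  "Gl dA dB K = concat (map (\<lambda>k. replicate (dB k) (dA k)) [0..<K])"

lemma Gl_Suc: "Gl dA dB (Suc K) = Gl dA dB K @ replicate (dB K) (dA K)"
  by (simp add: Gl_def)

lemma Gl_len: "length (Gl dA dB K) = (\<Sum>j<K. dB j)"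
  by (induction K) (simp_all add: Gl_def)

lemma Gl_sum: "sum_list (Gl dA dB K) = (\<Sum>j<K. dA j * dB j)"
  by (induction K) (simp_all add: Gl_Suc Gl_def sum_list_replicate)

lemma Gl_prefix: "K \<le> K' \<Longrightarrow> \<exists>rest. Gl dA dB K' = Gl dA dB K @ rest"
proof (induction K' rule: dec_induct)
  case base then show ?case by simp
next
  case (step K')
  then obtain rest where "Gl dA dB K' = Gl dA dB K @ rest" by blast
  then show ?case by (simp add: Gl_Suc)
qed

lemma Qv_Gl:
  assumes "K \<le> K'"
  shows "map (Qv (Gl dA dB K') p) [0..<length (Gl dA dB K)]
    = concat (map (\<lambda>k. map (\<lambda>b. \<Sum>a<dA k. p ! ((\<Sum>j<k. dA j * dB j) + b * dA k + a)) [0..<dB k]) [0..<K])"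
  using assms
proof (induction K)
  case 0 then show ?case by (simp add: Gl_def)
next
  case (Suc K)
  define x where "x = length (Gl dA dB K)"
  obtain rest where GK': "Gl dA dB K' = Gl dA dB K @ replicate (dB K) (dA K) @ rest"
    using Gl_prefix[OF Suc.prems] by (auto simp: Gl_Suc)
  have len: "length (Gl dA dB (Suc K)) = x + dB K" by (simp add: x_def Gl_Suc)
  have split: "[0..<x + dB K] = [0..<x] @ map (\<lambda>b. x + b) [0..<dB K]"
  proof -
    have "[0..<x + dB K] = [0..<x] @ [x..<x + dB K]" by (rule upt_add_eq_append) simp
    also have "[x..<x + dB K] = map (\<lambda>b. x + b) [0..<dB K]" by (rule nth_equalityI) auto
    finally show ?thesis .
  qed
  have blk: "Qv (Gl dA dB K') p (x + b) = (\<Sum>a<dA K. p ! ((\<Sum>j<K. dA j * dB j) + b * dA K + a))"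
    if b: "b < dB K" for b
  proof -
    have nth: "Gl dA dB K' ! (x + b) = dA K" unfolding GK' x_def using b by (simp add: nth_append)
    have "take (x + b) (Gl dA dB K') = Gl dA dB K @ take b (replicate (dB K) (dA K))"
      unfolding GK' x_def using b by simp
    then have "bstart (Gl dA dB K') (x + b) = (\<Sum>j<K. dA j * dB j) + b * dA K"
      unfolding bstart_def using b by (simp add: Gl_sum min_def sum_list_replicate)
    then show ?thesis unfolding Qv_def nth by simp
  qed
  have "map (Qv (Gl dA dB K') p) [0..<length (Gl dA dB (Suc K))]
      = map (Qv (Gl dA dB K') p) [0..<x] @ map (\<lambda>b. Qv (Gl dA dB K') p (x + b)) [0..<dB K]"
    unfolding len split by simp
  also have "map (Qv (Gl dA dB K') p) [0..<x] = concat (map (\<lambda>k. map (\<lambda>b. \<Sum>a<dA k. p ! ((\<Sum>j<k. dA j * dB j) + b * dA k + a)) [0..<dB k]) [0..<K])"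
    unfolding x_def by (rule Suc.IH) (use Suc.prems in simp)
  also have "map (\<lambda>b. Qv (Gl dA dB K') p (x + b)) [0..<dB K] = map (\<lambda>b. \<Sum>a<dA K. p ! ((\<Sum>j<K. dA j * dB j) + b * dA K + a)) [0..<dB K]"
    using blk by simp
  finally show ?case by simp
qed

lemma Gl_sorted:
  assumes "\<And>i j. i \<le> j \<Longrightarrow> j < K \<Longrightarrow> dA j \<le> dA i"
  shows "sorted_wrt (\<ge>) (Gl dA dB K)"
  using assms
proof (induction K)
  case 0 then show ?case by (simp add: Gl_def)
next
  case (Suc K)
  have s1: "sorted_wrt (\<ge>) (Gl dA dB K)" using Suc by auto
  have s2: "sorted_wrt (\<ge>) (replicate (dB K) (dA K))" by (simp add: sorted_wrt_iff_nth_less)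
  have setG: "set (Gl dA dB K) \<subseteq> dA ` {..<K}" by (auto simp: Gl_def)
  have s3: "\<forall>x\<in>set (Gl dA dB K). \<forall>y\<in>set (replicate (dB K) (dA K)). y \<le> x"
  proof (intro ballI)
    fix x y assume x: "x \<in> set (Gl dA dB K)" and y: "y \<in> set (replicate (dB K) (dA K))"
    from x setG obtain k where k: "k < K" "x = dA k" by auto
    have "y = dA K" using y by simp
    then show "y \<le> x" using Suc.prems[of k K] k by simp
  qed
  show ?case unfolding Gl_Suc sorted_wrt_append using s1 s2 s3 by simp
qed

lemma mset_Gl: "mset (Gl dA dB K) = (\<Sum>k<K. replicate_mset (dB k) (dA k))"
  by (induction K) (simp_all add: Gl_Suc Gl_def)


lemma mset_map_concat_upt:
  "mset (map F (concat (map G [0..<K]))) = (\<Sum>m<K. mset (map F (G m)))"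
  by (induction K) simp_all

lemma sum_list_concat': "sum_list (concat xss) = sum_list (map sum_list xss)" for xss :: "real list list"
  by (induction xss) auto

lemma sum_list_map_upt': "sum_list (map f [0..<m]) = (\<Sum>i<m. f i)" for f :: "nat \<Rightarrow> real"
  by (induction m) auto

lemma antitone_from_step:
  fixes h :: "nat \<Rightarrow> nat"
  assumes "\<forall>k<N. h (Suc k) \<le> h k"
  shows "i \<le> j \<Longrightarrow> j < Suc N \<Longrightarrow> h j \<le> h i"
proof (induction j rule: dec_induct)
  case base then show ?case by simp
next
  case (step j)
  then have jN: "j < N" by simp
  then have "h (Suc j) \<le> h j" using assms by simp
  moreover have "h j \<le> h i" using step jN by simp
  ultimately show ?case by simp
qed

lemma Bs_mem: "ys \<in> set (Bstates N lB) \<longleftrightarrow> length ys = lB \<and> sum_list ys \<le> N"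
  unfolding Bstates_def by (auto simp: comps_mem)

lemma Bs_distinct: "distinct (Bstates N lB)"
  unfolding Bstates_def
  by (rule distinct_concat_upt) (auto simp: comps_distinct comps_mem)

theorem theorem1:
  fixes N L lA :: nat and \<beta> :: real and \<rho> :: "complex mat" and p :: "real list"
    and \<pi> :: "nat \<Rightarrow> nat"
  assumes "L \<ge> 2" and "1 \<le> lA" and "lA \<le> L - 1" and "\<beta> > 1"
    and "density_op (length (comps N L)) \<rho>"
    and "mset (map complex_of_real p) = proots (char_poly \<rho>)"
    and "sorted_wrt (\<ge>) p"
    and "bij_betw \<pi> {..N} {..N}"
    and "\<forall>k<N. (\<pi> (Suc k) + lA - 1) choose (lA - 1) \<le> (\<pi> k + lA - 1) choose (lA - 1)"
  shows
   "(let lB = L - lA;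
         dA = (\<lambda>k. (\<pi> k + lA - 1) choose (lA - 1));
         dB = (\<lambda>k. (N - \<pi> k + lB - 1) choose (lB - 1));
         off = (\<lambda>k. \<Sum>j<k. dA j * dB j);
         q = (\<lambda>k b. \<Sum>a<dA k. p ! (off k + b * dA k + a));
         val = - (\<Sum>k\<le>N. \<Sum>b<dB k. q k b * log \<beta> (q k b));
         S = (\<lambda>U. vN_entropy \<beta> (ptrace_A N L lA (U * \<rho> * adj U)))
     in (\<exists>U. unitary_op (length (comps N L)) U \<and> S U = val)
        \<and> (\<forall>U. unitary_op (length (comps N L)) U \<longrightarrow> val \<le> S U))"
proof -
  note L2 = assms(1) and lA1 = assms(2) and lAL1 = assms(3) and b = assms(4) and dens = assms(5)
    and spec = assms(6) and psorted = assms(7) and pib = assms(8) and dAdesc = assms(9)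
  define lB where "lB = L - lA"
  define dA where "dA = (\<lambda>k. (\<pi> k + lA - 1) choose (lA - 1))"
  define dB where "dB = (\<lambda>k. (N - \<pi> k + lB - 1) choose (lB - 1))"
  define off where "off = (\<lambda>k. \<Sum>j<k. dA j * dB j)"
  define q where "q = (\<lambda>k b. \<Sum>a<dA k. p ! (off k + b * dA k + a))"
  define val where "val = - (\<Sum>k\<le>N. \<Sum>b<dB k. q k b * log \<beta> (q k b))"
  define S where "S = (\<lambda>U. vN_entropy \<beta> (ptrace_A N L lA (U * \<rho> * adj U)))"
  define st where "st = comps N L"
  define d where "d = length st"
  define Bs where "Bs = Bstates N lB"
  define n where "n = length Bs"
  define bm where "bm a = inv_into {..<n} (\<lambda>i. Bs ! i) (drop lA (st ! a))" for a
  define \<kappa> where "\<kappa> a = take lA (st ! a)" for a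
  define g where "g = Gl dA dB (Suc N)"
  have lApos: "0 < lA" using lA1 by simp
  have lBpos: "0 < lB" using lAL1 L2 unfolding lB_def by simp
  have lAL: "lA \<le> L" using lAL1 by simp
  have st_mem: "length (st ! a) = L \<and> sum_list (st ! a) = N" if "a < d" for a
    using that nth_mem[of a st] comps_mem unfolding d_def st_def by blast
  have st_dist: "distinct st" unfolding st_def by (rule comps_distinct)
  have Bs_dist: "distinct Bs" unfolding Bs_def by (rule Bs_distinct)
  have sum_td: "sum_list (take lA xs) + sum_list (drop lA xs) = sum_list xs" for xs :: "nat list"
    by (metis append_take_drop_id sum_list_append)
  have drop_mem: "drop lA (st ! a) \<in> set Bs" if a: "a < d" for a
    using st_mem[OF a] sum_td[of "st ! a"] unfolding Bs_def Bs_mem lB_def by simp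
  have setBs: "set Bs = (\<lambda>i. Bs ! i) ` {..<n}" unfolding n_def by (auto simp: in_set_conv_nth)
  have bm_lt: "bm a < n" if a: "a < d" for a
    unfolding bm_def using drop_mem[OF a] setBs by (metis inv_into_into lessThan_iff)
  have bm_nth: "Bs ! (bm a) = drop lA (st ! a)" if a: "a < d" for a
    unfolding bm_def using drop_mem[OF a] setBs by (metis f_inv_into_f)
  have bm_iff: "(drop lA (st ! a) = Bs ! i) \<longleftrightarrow> bm a = i" if a: "a < d" and i: "i < n" for a i
    using bm_nth[OF a] bm_lt[OF a] i Bs_dist nth_eq_iff_index_eq unfolding n_def by metis
  have ptr_eq: "ptrace_A N L lA \<sigma> = ptr d n bm \<kappa> \<sigma>" for \<sigma>
  proof -
    have "ptrace_A N L lA \<sigma> = mat n n (\<lambda>(i, j). \<Sum>a<d. \<Sum>b<d.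
        if drop lA (st ! a) = Bs ! i \<and> drop lA (st ! b) = Bs ! j \<and> take lA (st ! a) = take lA (st ! b)
        then \<sigma> $$ (a, b) else 0)"
      unfolding ptrace_A_def Let_def st_def d_def Bs_def n_def lB_def ..
    also have "\<dots> = ptr d n bm \<kappa> \<sigma>"
      unfolding ptr_def
    proof (rule cong_mat[OF refl refl])
      fix i j assume ij: "i < n" "j < n"
      show "(case (i, j) of (i, j) \<Rightarrow> \<Sum>a<d. \<Sum>b<d.
        if drop lA (st ! a) = Bs ! i \<and> drop lA (st ! b) = Bs ! j \<and> take lA (st ! a) = take lA (st ! b)
        then \<sigma> $$ (a, b) else 0) = (case (i, j) of (i, j) \<Rightarrow> \<Sum>a<d. \<Sum>b<d.
        if bm a = i \<and> bm b = j \<and> \<kappa> a = \<kappa> b then \<sigma> $$ (a, b) else 0)"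
        using ij bm_iff by (auto simp: \<kappa>_def intro!: sum.cong)
    qed
    finally show ?thesis .
  qed
  have inj: "inj_on (\<lambda>a. (bm a, \<kappa> a)) {..<d}"
  proof (rule inj_onI)
    fix a b assume a: "a \<in> {..<d}" and b: "b \<in> {..<d}" and e: "(bm a, \<kappa> a) = (bm b, \<kappa> b)"
    then have "drop lA (st ! a) = drop lA (st ! b)" using bm_nth by (metis lessThan_iff prod.inject)
    moreover have "take lA (st ! a) = take lA (st ! b)" using e by (simp add: \<kappa>_def)
    ultimately have "st ! a = st ! b" by (metis append_take_drop_id)
    then show "a = b" using a b st_dist nth_eq_iff_index_eq unfolding d_def by auto
  qed
  define c where "c i = card {a. a < d \<and> bm a = i}" for i
  have cval: "c i = (N - sum_list (Bs ! i) + lA - 1) choose (lA - 1)" if i: "i < n" for i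
  proof -
    define y where "y = Bs ! i"
    have y: "length y = lB" "sum_list y \<le> N" using nth_mem[of i Bs] i Bs_mem unfolding y_def Bs_def n_def by auto
    have fib: "{a. a < d \<and> bm a = i} = {a. a < d \<and> drop lA (st ! a) = y}"
      using bm_iff i unfolding y_def by auto
    have "bij_betw (\<lambda>a. take lA (st ! a)) {a. a < d \<and> drop lA (st ! a) = y} (set (comps (N - sum_list y) lA))"
    proof (rule bij_betw_imageI)
      show "inj_on (\<lambda>a. take lA (st ! a)) {a. a < d \<and> drop lA (st ! a) = y}"
      proof (rule inj_onI)
        fix a b assume a: "a \<in> {a. a < d \<and> drop lA (st ! a) = y}" and b: "b \<in> {a. a < d \<and> drop lA (st ! a) = y}"
          and e: "take lA (st ! a) = take lA (st ! b)"
        then have "st ! a = st ! b" by (metis (mono_tags, lifting) append_take_drop_id mem_Collect_eq)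
        then show "a = b" using a b st_dist nth_eq_iff_index_eq unfolding d_def by auto
      qed
      show "(\<lambda>a. take lA (st ! a)) ` {a. a < d \<and> drop lA (st ! a) = y} = set (comps (N - sum_list y) lA)"
      proof
        show "(\<lambda>a. take lA (st ! a)) ` {a. a < d \<and> drop lA (st ! a) = y} \<subseteq> set (comps (N - sum_list y) lA)"
        proof
          fix x assume "x \<in> (\<lambda>a. take lA (st ! a)) ` {a. a < d \<and> drop lA (st ! a) = y}"
          then obtain a where a: "a < d" "drop lA (st ! a) = y" and x: "x = take lA (st ! a)" by auto
          have "length x = lA" using st_mem[OF a(1)] lAL x by simp
          moreover have "sum_list x = N - sum_list y" using st_mem[OF a(1)] sum_td[of "st ! a"] a x by simp
          ultimately show "x \<in> set (comps (N - sum_list y) lA)" by (simp add: comps_mem)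
        qed
        show "set (comps (N - sum_list y) lA) \<subseteq> (\<lambda>a. take lA (st ! a)) ` {a. a < d \<and> drop lA (st ! a) = y}"
        proof
          fix x assume "x \<in> set (comps (N - sum_list y) lA)"
          then have x: "length x = lA" "sum_list x = N - sum_list y" by (auto simp: comps_mem)
          have "x @ y \<in> set st" unfolding st_def comps_mem using x y lAL unfolding lB_def by simp
          then obtain a where a: "a < d" "st ! a = x @ y" unfolding d_def by (auto simp: in_set_conv_nth)
          then show "x \<in> (\<lambda>a. take lA (st ! a)) ` {a. a < d \<and> drop lA (st ! a) = y}"
            using x by (intro image_eqI[of _ _ a]) auto
        qed
      qed
    qed
    then have "c i = card (set (comps (N - sum_list y) lA))" unfolding c_def fib by (rule bij_betw_same_card)
    also have "\<dots> = length (comps (N - sum_list y) lA)" by (rule distinct_card[OF comps_distinct])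
    also have "\<dots> = (N - sum_list y + lA - 1) choose (lA - 1)" by (rule comps_length[OF lApos])
    finally show ?thesis unfolding y_def .
  qed
  define hA where "hA m = (N - m + lA - 1) choose (lA - 1)" for m
  have mc: "mset (map c [0..<n]) = (\<Sum>m<Suc N. replicate_mset (length (comps m lB)) (hA m))"
  proof -
    have "map c [0..<n] = map (\<lambda>y. hA (sum_list y)) Bs"
      by (rule nth_equalityI) (auto simp: n_def cval hA_def)
    also have "\<dots> = map (\<lambda>y. hA (sum_list y)) (concat (map (\<lambda>m. comps m lB) [0..<Suc N]))"
      by (simp add: Bs_def Bstates_def)
    finally have eqm: "map c [0..<n] = map (\<lambda>y. hA (sum_list y)) (concat (map (\<lambda>m. comps m lB) [0..<Suc N]))" .
    have "mset (map c [0..<n]) = (\<Sum>m<Suc N. mset (map (\<lambda>y. hA (sum_list y)) (comps m lB)))"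
      unfolding eqm by (rule mset_map_concat_upt)
    also have "\<dots> = (\<Sum>m<Suc N. replicate_mset (length (comps m lB)) (hA m))"
    proof (rule sum.cong[OF refl])
      fix m
      have "map (\<lambda>y. hA (sum_list y)) (comps m lB) = map (\<lambda>y. hA m) (comps m lB)"
        by (rule map_cong) (auto simp: comps_mem)
      then show "mset (map (\<lambda>y. hA (sum_list y)) (comps m lB)) = replicate_mset (length (comps m lB)) (hA m)"
        by (simp add: map_replicate_const)
    qed
    finally show ?thesis .
  qed
  have rb: "bij_betw (\<lambda>k. N - \<pi> k) {..<Suc N} {..<Suc N}"
  proof -
    have r: "bij_betw (\<lambda>m. N - m) {..N} {..N}"
      by (rule bij_betwI[where g="\<lambda>m. N - m"]) auto
    have "bij_betw ((\<lambda>m. N - m) \<circ> \<pi>) {..N} {..N}" by (rule bij_betw_trans[OF pib r])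
    then show ?thesis by (simp add: lessThan_Suc_atMost comp_def)
  qed
  have pile: "\<pi> k \<le> N" if "k < Suc N" for k using pib that unfolding bij_betw_def by auto
  have mg: "mset g = mset (map c [0..<n])"
  proof -
    have "mset g = (\<Sum>k<Suc N. replicate_mset (dB k) (dA k))" unfolding g_def by (rule mset_Gl)
    also have "\<dots> = (\<Sum>k<Suc N. (\<lambda>m. replicate_mset (length (comps m lB)) (hA m)) (N - \<pi> k))"
      using pile by (intro sum.cong refl) (simp add: comps_length[OF lBpos] hA_def dA_def dB_def)
    also have "\<dots> = (\<Sum>m<Suc N. replicate_mset (length (comps m lB)) (hA m))"
      by (rule sum.reindex_bij_betw[OF rb])
    finally show ?thesis using mc by simp
  qed
  have glen: "length g = n" using arg_cong[OF mg, of size] by simp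
  obtain f where fp: "f permutes {..<length g}" and fl: "permute_list f g = map c [0..<n]"
    using mset_eq_permutation[OF mg[symmetric]] by blast
  have fbij: "bij_betw f {..<n} {..<n}" using permutes_imp_bij[OF fp] glen by simp
  have gcard: "card {a. a < d \<and> bm a = i} = g ! (f i)" if i: "i < n" for i
  proof -
    have "g ! (f i) = permute_list f g ! i" using permute_list_nth[OF fp] i glen by simp
    also have "\<dots> = c i" using fl i by simp
    finally show ?thesis by (simp add: c_def)
  qed
  have gsorted: "sorted_wrt (\<ge>) g" unfolding g_def
    by (rule Gl_sorted, rule antitone_from_step[of N dA]) (use dAdesc in \<open>simp_all add: dA_def\<close>)
  have gsum: "sum_list g = d"
  proof -
    have "real (sum_list g) = (\<Sum>u<n. real (g ! u))" using glen by (simp add: sum_list_sum_nth atLeast0LessThan)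
    also have "\<dots> = (\<Sum>i<n. real (g ! (f i)))" by (rule sum.reindex_bij_betw[OF fbij, symmetric])
    also have "\<dots> = (\<Sum>i<n. real (card {a. a < d \<and> bm a = i}) * 1)" using gcard by simp
    also have "\<dots> = (\<Sum>a<d. (\<lambda>_. 1::real) (bm a))" by (rule group_beta[symmetric]) (rule bm_lt)
    also have "\<dots> = real d" by simp
    finally show ?thesis by linarith
  qed
  interpret C: core d n bm \<kappa> g f \<rho> p
    by (unfold_locales) (use bm_lt inj glen gsorted gsum fbij gcard dens spec psorted in \<open>simp_all add: d_def st_def\<close>)
  have val_eq: "val = - (\<Sum>u<n. Qv g p u * log \<beta> (Qv g p u))"
  proof -
    have "(\<Sum>u<n. Qv g p u * log \<beta> (Qv g p u)) = sum_list (map (\<lambda>x. x * log \<beta> x) (map (Qv g p) [0..<length g]))"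
      using glen by (simp add: sum_list_sum_nth atLeast0LessThan)
    also have "map (Qv g p) [0..<length g] = concat (map (\<lambda>k. map (q k) [0..<dB k]) [0..<Suc N])"
      unfolding g_def using Qv_Gl[of "Suc N" "Suc N" dA dB p] by (simp add: q_def off_def)
    also have "sum_list (map (\<lambda>x. x * log \<beta> x) (concat (map (\<lambda>k. map (q k) [0..<dB k]) [0..<Suc N])))
        = (\<Sum>k<Suc N. \<Sum>b<dB k. q k b * log \<beta> (q k b))"
      by (simp add: map_concat sum_list_concat' comp_def sum_list_map_upt')
    finally show ?thesis unfolding val_def by (simp add: lessThan_Suc_atMost)
  qed
  have main: "(\<exists>U. unitary_op (length (comps N L)) U \<and> S U = val)
        \<and> (\<forall>U. unitary_op (length (comps N L)) U \<longrightarrow> val \<le> S U)"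
    using C.exist[of \<beta>] C.lower[OF b] unfolding S_def val_eq ptr_eq d_def st_def by auto
  show ?thesis unfolding Let_def using main
    unfolding S_def val_def q_def off_def dA_def dB_def lB_def by simp
qed


end
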